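(* Let $R$ be a t-unital ring, $\widetilde R=\mathbb Z\oplus R$ its unitalization, and $N$ a left null-module over $R$. Then (a) $R\otimes_R N=R\otimes_{\widetilde R}N=0$ and $\mathrm{Tor}^{\widetilde R}_1(R,N)=0$; (b) $\mathrm{Hom}_R(R,N)=\mathrm{Hom}_{\widetilde R}(R,N)=0$ and $\mathrm{Ext}^1_{\widetilde R}(R,N)=0$.
   Context: Rings are associative, not necessarily unital. The unitalization $\widetilde R=\mathbb Z\oplus R$ has multiplication $(n+r)(n'+r')=nn'+(nr'+n'r+rr')$, so that $R$ is a two-sided ideal; nonunital $R$-modules are the same as unital $\widetilde R$-modules, and Tor and Ext are computed over the unital ring $\widetilde R$. $R$ is t-unital if the multiplication map $R\otimes_R R\to R$ is an isomorphism. A left $R$-module $N$ is a null-module if $rn=0$ for all $r\in R$, $n\in N$. *)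

theory Defs
  imports "HOL-Library.Poly_Mapping" "HOL-Library.Product_Plus"
begin

definition zsmul :: "int \<Rightarrow> 'a::ab_group_add \<Rightarrow> 'a" where
  "zsmul k x = (\<Sum>i<nat k. x) - (\<Sum>i<nat (- k). x)"

(* Unitalization  R~ = Z (+) R, elements (n, r) standing for n + r *)
type_synonym 'r unitz = "int \<times> 'r"

definition umult :: "'r::ring unitz \<Rightarrow> 'r unitz \<Rightarrow> 'r unitz" where
  "umult s t = (fst s * fst t,
                zsmul (fst s) (snd t) + zsmul (fst t) (snd s) + snd s * snd t)"

definition ract_R :: "'r::ring \<Rightarrow> 'r unitz \<Rightarrow> 'r" where
  "ract_R a s = zsmul (fst s) a + a * snd s"

definition lact_R :: "'r::ring unitz \<Rightarrow> 'r \<Rightarrow> 'r" where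
  "lact_R s a = zsmul (fst s) a + snd s * a"

definition lact_mod :: "('r::ring \<Rightarrow> 'n::ab_group_add \<Rightarrow> 'n) \<Rightarrow> 'r unitz \<Rightarrow> 'n \<Rightarrow> 'n" where
  "lact_mod smul s x = zsmul (fst s) x + smul (snd s) x"

definition left_module :: "('r::ring \<Rightarrow> 'n::ab_group_add \<Rightarrow> 'n) \<Rightarrow> bool" where
  "left_module smul \<longleftrightarrow>
     (\<forall>r x y. smul r (x + y) = smul r x + smul r y) \<and>
     (\<forall>r s x. smul (r + s) x = smul r x + smul s x) \<and>
     (\<forall>r s x. smul (r * s) x = smul r (smul s x))"

definition null_module :: "('r::ring \<Rightarrow> 'n::ab_group_add \<Rightarrow> 'n) \<Rightarrow> bool" where
  "null_module smul \<longleftrightarrow> (\<forall>r x. smul r x = 0)"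

(* Tensor product M \<otimes> N: free abelian group on M \<times> N modulo the subgroup
   generated by biadditivity and balancing relations *)
inductive_set tensor_rel ::
  "'m::ab_group_add set \<Rightarrow> 'n::ab_group_add set \<Rightarrow> ('m \<Rightarrow> 's \<Rightarrow> 'm) \<Rightarrow> ('s \<Rightarrow> 'n \<Rightarrow> 'n)
   \<Rightarrow> ('m \<times> 'n \<Rightarrow>\<^sub>0 int) set"
  for M N ract lact where
  rel_zero: "0 \<in> tensor_rel M N ract lact"
| rel_add: "x \<in> tensor_rel M N ract lact \<Longrightarrow> y \<in> tensor_rel M N ract lact
            \<Longrightarrow> x + y \<in> tensor_rel M N ract lact"
| rel_neg: "x \<in> tensor_rel M N ract lact \<Longrightarrow> - x \<in> tensor_rel M N ract lact"
| rel_ladd: "m \<in> M \<Longrightarrow> m' \<in> M \<Longrightarrow> n \<in> N \<Longrightarrow>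
     Poly_Mapping.single (m + m', n) 1 - Poly_Mapping.single (m, n) 1
       - Poly_Mapping.single (m', n) 1 \<in> tensor_rel M N ract lact"
| rel_radd: "m \<in> M \<Longrightarrow> n \<in> N \<Longrightarrow> n' \<in> N \<Longrightarrow>
     Poly_Mapping.single (m, n + n') 1 - Poly_Mapping.single (m, n) 1
       - Poly_Mapping.single (m, n') 1 \<in> tensor_rel M N ract lact"
| rel_bal: "m \<in> M \<Longrightarrow> n \<in> N \<Longrightarrow>
     Poly_Mapping.single (ract m s, n) 1 - Poly_Mapping.single (m, lact s n) 1
       \<in> tensor_rel M N ract lact"

(* M \<otimes> N = 0 : every element of the free group on M \<times> N is a relation *)
definition tensor_is_zero ::
  "'m::ab_group_add set \<Rightarrow> 'n::ab_group_add set \<Rightarrow> ('m \<Rightarrow> 's \<Rightarrow> 'm) \<Rightarrow> ('s \<Rightarrow> 'n \<Rightarrow> 'n) \<Rightarrow> bool"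
  where "tensor_is_zero M N ract lact \<longleftrightarrow>
           (\<forall>x. Poly_Mapping.keys x \<subseteq> M \<times> N \<longrightarrow> x \<in> tensor_rel M N ract lact)"

(* multiplication map R \<otimes>_R R \<rightarrow> R on the free group *)
definition mult_map :: "('r::ring \<times> 'r \<Rightarrow>\<^sub>0 int) \<Rightarrow> 'r" where
  "mult_map x = (\<Sum>z\<in>Poly_Mapping.keys x. zsmul (Poly_Mapping.lookup x z) (fst z * snd z))"

definition t_unital :: "'r::ring itself \<Rightarrow> bool" where
  "t_unital _ \<longleftrightarrow>
     (\<forall>r::'r. \<exists>x. mult_map x = r) \<and>
     (\<forall>x::('r \<times> 'r \<Rightarrow>\<^sub>0 int). mult_map x = 0 \<longrightarrow>
          x \<in> tensor_rel UNIV UNIV (*) (*))"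

definition is_hom ::
  "'p::ab_group_add set \<Rightarrow> 'n::ab_group_add set \<Rightarrow> ('s \<Rightarrow> 'p \<Rightarrow> 'p) \<Rightarrow> ('s \<Rightarrow> 'n \<Rightarrow> 'n)
   \<Rightarrow> ('p \<Rightarrow> 'n) \<Rightarrow> bool" where
  "is_hom P N lactP lactN f \<longleftrightarrow>
     (\<forall>p\<in>P. f p \<in> N) \<and> (\<forall>p\<in>P. \<forall>q\<in>P. f (p + q) = f p + f q) \<and>
     (\<forall>s. \<forall>p\<in>P. f (lactP s p) = lactN s (f p))"

definition free_car :: "'x set \<Rightarrow> ('x \<Rightarrow>\<^sub>0 'r::ring unitz) set" where
  "free_car X = {f. Poly_Mapping.keys f \<subseteq> X}"

definition free_ract :: "('x \<Rightarrow>\<^sub>0 'r::ring unitz) \<Rightarrow> 'r unitz \<Rightarrow> ('x \<Rightarrow>\<^sub>0 'r unitz)" where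
  "free_ract f s = Poly_Mapping.map (\<lambda>c. umult c s) f"

definition free_lact :: "'r::ring unitz \<Rightarrow> ('x \<Rightarrow>\<^sub>0 'r unitz) \<Rightarrow> ('x \<Rightarrow>\<^sub>0 'r unitz)" where
  "free_lact s f = Poly_Mapping.map (\<lambda>c. umult s c) f"

(* the map from the free module on X \<subseteq> M to M, sending basis element x to x *)
definition aug_r :: "('x::ab_group_add \<Rightarrow> 's \<Rightarrow> 'x) \<Rightarrow> ('x \<Rightarrow>\<^sub>0 's::zero) \<Rightarrow> 'x" where
  "aug_r act f = (\<Sum>x\<in>Poly_Mapping.keys f. act x (Poly_Mapping.lookup f x))"

definition aug_l :: "('s \<Rightarrow> 'x::ab_group_add \<Rightarrow> 'x) \<Rightarrow> ('x \<Rightarrow>\<^sub>0 's::zero) \<Rightarrow> 'x" where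
  "aug_l act f = (\<Sum>x\<in>Poly_Mapping.keys f. act (Poly_Mapping.lookup f x) x)"

definition push :: "('a \<Rightarrow> 'b) \<Rightarrow> ('a \<Rightarrow>\<^sub>0 int) \<Rightarrow> ('b \<Rightarrow>\<^sub>0 int)" where
  "push h x = (\<Sum>z\<in>Poly_Mapping.keys x. Poly_Mapping.single (h z) (Poly_Mapping.lookup x z))"

(* Tor_1^{R~}(M,N) = H_1(P_\<bullet> \<otimes>_{R~} N) for the canonical free resolution
   ... \<rightarrow> P2 \<rightarrow> P1 \<rightarrow> P0 \<rightarrow> M \<rightarrow> 0 of the right R~-module M
   (P0 free on M, P1 free on K0 = ker(P0\<rightarrow>M), P2 free on K1 = ker(P1\<rightarrow>P0)). *)
definition Tor1_vanishes ::
  "'m::ab_group_add set \<Rightarrow> ('m \<Rightarrow> 'r::ring unitz \<Rightarrow> 'm) \<Rightarrow> 'n::ab_group_add set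
   \<Rightarrow> ('r unitz \<Rightarrow> 'n \<Rightarrow> 'n) \<Rightarrow> bool" where
  "Tor1_vanishes M act N lact \<longleftrightarrow>
    (let P0 = free_car M;
         K0 = {f\<in>P0. aug_r act f = 0};
         P1 = free_car K0;
         K1 = {g\<in>P1. aug_r free_ract g = 0};
         P2 = free_car K1
     in \<forall>x. Poly_Mapping.keys x \<subseteq> P1 \<times> N \<and>
            push (\<lambda>(p, n). (aug_r free_ract p, n)) x \<in> tensor_rel P0 N free_ract lact
          \<longrightarrow> (\<exists>y. Poly_Mapping.keys y \<subseteq> P2 \<times> N \<and>
                 push (\<lambda>(q, n). (aug_r free_ract q, n)) y - x \<in> tensor_rel P1 N free_ract lact))"

(* Ext^1_{R~}(M,N) = H^1(Hom_{R~}(P_\<bullet>, N)) for the canonical free resolution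
   P2 \<rightarrow> P1 \<rightarrow> P0 \<rightarrow> M \<rightarrow> 0 of the left R~-module M. *)
definition Ext1_vanishes ::
  "'m::ab_group_add set \<Rightarrow> ('r::ring unitz \<Rightarrow> 'm \<Rightarrow> 'm) \<Rightarrow> 'n::ab_group_add set
   \<Rightarrow> ('r unitz \<Rightarrow> 'n \<Rightarrow> 'n) \<Rightarrow> bool" where
  "Ext1_vanishes M act N lact \<longleftrightarrow>
    (let P0 = free_car M;
         K0 = {f\<in>P0. aug_l act f = 0};
         P1 = free_car K0;
         K1 = {g\<in>P1. aug_l free_lact g = 0};
         P2 = free_car K1
     in \<forall>\<phi>. is_hom P1 N free_lact lact \<phi> \<and> (\<forall>q\<in>P2. \<phi> (aug_l free_lact q) = 0)
          \<longrightarrow> (\<exists>\<psi>. is_hom P0 N free_lact lact \<psi> \<and>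
                 (\<forall>p\<in>P1. \<phi> p = \<psi> (aug_l free_lact p))))"

end

theory Submission imports Defs begin

lemma nsum_add: fixes m n :: nat shows "(\<Sum>i<m+n. (x::'a::ab_group_add)) = (\<Sum>i<m. x) + (\<Sum>i<n. x)"
  by (induction n) (auto simp: algebra_simps)

lemma zsmul_int_diff: "zsmul (int m - int n) x = (\<Sum>i<m. x) - (\<Sum>i<n. x)"
proof (cases "n \<le> m")
  case True
  then obtain d where "m = n + d" using le_Suc_ex by blast
  then show ?thesis by (simp add: zsmul_def nsum_add)
next
  case False
  then obtain d where "n = m + d" using le_Suc_ex[of m n] by auto
  then show ?thesis by (simp add: zsmul_def nsum_add)
qed

lemma zsmul_add: "zsmul (a + b) x = zsmul a x + zsmul b x"
proof -
  obtain m n where a: "a = int m - int n" using int_diff_cases by blast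
  obtain p q where b: "b = int p - int q" using int_diff_cases by blast
  have "a + b = int (m+p) - int (n+q)" using a b by simp
  then show ?thesis using a b by (simp only: zsmul_int_diff nsum_add) (simp add: algebra_simps)
qed

lemma zsmul_0 [simp]: "zsmul 0 x = 0" by (simp add: zsmul_def)
lemma zsmul_1 [simp]: "zsmul 1 x = x" by (simp add: zsmul_def)
lemma zsmul_zero [simp]: "zsmul k (0::'a::ab_group_add) = 0" by (simp add: zsmul_def)
lemma zsmul_neg: "zsmul (- a) x = - zsmul a x"
  using zsmul_add[of a "-a" x] by (metis add.commute add.right_neutral add_diff_cancel_left' diff_add_cancel zsmul_0 minus_add_cancel add_uminus_conv_diff)
lemma zsmul_diff: "zsmul (a - b) x = zsmul a x - zsmul b x"
  using zsmul_add[of a "-b" x] by (simp add: zsmul_neg)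

lemma zsmul_right_add: "zsmul k (x + y) = zsmul k x + zsmul k y"
  by (simp add: zsmul_def sum.distrib algebra_simps)

definition additive :: "('a::ab_group_add \<Rightarrow> 'b::ab_group_add) \<Rightarrow> bool" where
  "additive h \<longleftrightarrow> (\<forall>x y. h (x + y) = h x + h y)"

lemma additive_0: "additive h \<Longrightarrow> h 0 = 0"
proof -
  assume "additive h"
  then have "h (0 + 0) = h 0 + h 0" unfolding additive_def by blast
  then show ?thesis by simp
qed
lemma additive_neg: "additive h \<Longrightarrow> h (- x) = - h x"
proof -
  assume a: "additive h"
  then have "h (x + - x) = h x + h (- x)" unfolding additive_def by blast
  then show ?thesis using additive_0[OF a] by (simp add: eq_neg_iff_add_eq_0 add.commute)
qed
lemma additive_diff: "additive h \<Longrightarrow> h (x - y) = h x - h y"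
proof -
  assume a: "additive h"
  then have "h (x + - y) = h x + h (- y)" unfolding additive_def by blast
  then show ?thesis using additive_neg[OF a] by simp
qed
lemma additive_sum: "additive h \<Longrightarrow> h (sum f A) = (\<Sum>a\<in>A. h (f a))"
  by (induction A rule: infinite_finite_induct) (auto simp: additive_0 additive_def)
lemma additive_zsmul: "additive h \<Longrightarrow> h (zsmul k x) = zsmul k (h x)"
  by (simp add: zsmul_def additive_diff additive_sum)

lemma zsmul_right_neg: "zsmul k (- x) = - zsmul k x"
  using additive_neg[of "zsmul k" x] by (simp add: additive_def zsmul_right_add)
lemma zsmul_right_diff: "zsmul k (x - y) = zsmul k x - zsmul k y"
  using additive_diff[of "zsmul k" x] by (simp add: additive_def zsmul_right_add)
lemma zsmul_right_sum: "zsmul k (sum f A) = (\<Sum>a\<in>A. zsmul k (f a))"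
  using additive_sum[of "zsmul k"] by (simp add: additive_def zsmul_right_add)

lemma zsmul_nat_mult: "zsmul (int m * b) x = (\<Sum>i<m. zsmul b x)"
  by (induction m) (auto simp: algebra_simps zsmul_add)

lemma zsmul_of_nat: "zsmul (int m) y = (\<Sum>i<m. y)" by (simp add: zsmul_def)

lemma zsmul_mult: "zsmul (a * b) x = zsmul a (zsmul b x)"
proof -
  obtain m n where a: "a = int m - int n" using int_diff_cases by blast
  have "a * b = int m * b - int n * b" unfolding a by (simp add: left_diff_distrib)
  then show ?thesis unfolding a by (simp only: zsmul_diff zsmul_nat_mult zsmul_of_nat)
qed

lemma zsmul_int [simp]: "zsmul k (c::int) = k * c"
proof -
  obtain m n where a: "k = int m - int n" using int_diff_cases by blast
  then show ?thesis unfolding a by (simp only: zsmul_int_diff) (simp add: algebra_simps)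
qed

lemma additive_fst: "additive fst" by (simp add: additive_def)
lemma additive_snd: "additive snd" by (simp add: additive_def)
lemma additive_single: "additive (Poly_Mapping.single k)" by (simp add: additive_def single_add)
lemma additive_lookup: "additive (\<lambda>p. Poly_Mapping.lookup p k)" by (simp add: additive_def lookup_add)
lemma additive_mult_right: "additive (\<lambda>a. a * (b::'r::ring))" by (simp add: additive_def algebra_simps)
lemma additive_mult_left: "additive (\<lambda>a. (b::'r::ring) * a)" by (simp add: additive_def algebra_simps)

lemma zsmul_fst [simp]: "fst (zsmul k p) = zsmul k (fst p)"
  using additive_zsmul[OF additive_fst] .
lemma zsmul_snd [simp]: "snd (zsmul k p) = zsmul k (snd p)"
  using additive_zsmul[OF additive_snd] .
lemma zsmul_single: "zsmul k (Poly_Mapping.single z c) = Poly_Mapping.single z (zsmul k c)"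
  by (rule additive_zsmul[OF additive_single, symmetric])
lemma zsmul_frag_of: "zsmul k (Poly_Mapping.single z (1::int)) = Poly_Mapping.single z k"
  by (simp add: zsmul_single)
lemma lookup_zsmul [simp]: "Poly_Mapping.lookup (zsmul k p) z = zsmul k (Poly_Mapping.lookup p z)"
  using additive_zsmul[OF additive_lookup[of z], of k p] by simp
lemma zsmul_mult_left: "zsmul k (a::'r::ring) * b = zsmul k (a * b)"
  using additive_zsmul[OF additive_mult_right[of b]] by simp
lemma zsmul_mult_right: "b * zsmul k (a::'r::ring) = zsmul k (b * a)"
  using additive_zsmul[OF additive_mult_left[of b]] by simp


definition lin :: "('a \<Rightarrow> 'g::ab_group_add) \<Rightarrow> ('a \<Rightarrow>\<^sub>0 int) \<Rightarrow> 'g" where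
  "lin h x = (\<Sum>z\<in>Poly_Mapping.keys x. zsmul (Poly_Mapping.lookup x z) (h z))"

lemma lin_superset:
  assumes "finite S" "Poly_Mapping.keys x \<subseteq> S"
  shows "lin h x = (\<Sum>z\<in>S. zsmul (Poly_Mapping.lookup x z) (h z))"
  unfolding lin_def
  by (rule sum.mono_neutral_left) (use assms in \<open>auto simp: in_keys_iff\<close>)

lemma lin_add: "lin h (x + y) = lin h x + lin h y"
proof -
  let ?S = "Poly_Mapping.keys x \<union> Poly_Mapping.keys y"
  have f: "finite ?S" by simp
  have ks: "Poly_Mapping.keys (x+y) \<subseteq> ?S" by (rule keys_add)
  have "lin h (x + y) = (\<Sum>z\<in>?S. zsmul (Poly_Mapping.lookup (x+y) z) (h z))"
    by (rule lin_superset[OF f ks])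
  also have "\<dots> = (\<Sum>z\<in>?S. zsmul (Poly_Mapping.lookup x z) (h z)) + (\<Sum>z\<in>?S. zsmul (Poly_Mapping.lookup y z) (h z))"
    by (simp add: lookup_add zsmul_add sum.distrib)
  also have "\<dots> = lin h x + lin h y"
    by (simp add: lin_superset[OF f])
  finally show ?thesis .
qed

lemma additive_lin: "additive (lin h)" by (simp add: additive_def lin_add)
lemma lin_zero [simp]: "lin h 0 = 0" by (simp add: lin_def)
lemma lin_neg: "lin h (- x) = - lin h x" by (rule additive_neg[OF additive_lin])
lemma lin_diff: "lin h (x - y) = lin h x - lin h y" by (rule additive_diff[OF additive_lin])
lemma lin_sum: "lin h (sum f A) = (\<Sum>a\<in>A. lin h (f a))" by (rule additive_sum[OF additive_lin])
lemma lin_zsmul: "lin h (zsmul k x) = zsmul k (lin h x)" by (rule additive_zsmul[OF additive_lin])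

lemma lin_single [simp]: "lin h (Poly_Mapping.single z c) = zsmul c (h z)"
  by (cases "c = 0") (simp_all add: lin_def)

lemma lin_hom: "additive \<phi> \<Longrightarrow> \<phi> (lin h x) = lin (\<lambda>z. \<phi> (h z)) x"
  by (simp add: lin_def additive_sum additive_zsmul)

lemma lin_cong: "(\<And>z. z \<in> Poly_Mapping.keys x \<Longrightarrow> h z = h' z) \<Longrightarrow> lin h x = lin h' x"
  by (simp add: lin_def)

lemma lin_fun_zsmul: "lin (\<lambda>z. zsmul k (h z)) x = zsmul k (lin h x)"
  by (rule lin_hom[symmetric]) (simp add: additive_def zsmul_right_add)

lemma lin_fun_diff: "lin (\<lambda>z. h z - h' z) x = lin h x - lin h' x"
  by (simp add: lin_def zsmul_right_diff sum_subtractf)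

lemma lin_fun_add: "lin (\<lambda>z. h z + h' z) x = lin h x + lin h' x"
  by (simp add: lin_def zsmul_right_add sum.distrib)

lemma lin_fun_zero: "lin (\<lambda>z. 0) x = 0"
  by (simp add: lin_def)

lemma lin_id: "lin (\<lambda>z. Poly_Mapping.single z (1::int)) x = x"
proof (rule poly_mapping_eqI)
  fix k
  have "Poly_Mapping.lookup (lin (\<lambda>z. Poly_Mapping.single z (1::int)) x) k
      = (\<Sum>z\<in>Poly_Mapping.keys x. Poly_Mapping.lookup (Poly_Mapping.single z (Poly_Mapping.lookup x z)) k)"
    by (simp add: lin_def lookup_sum zsmul_frag_of)
  also have "\<dots> = Poly_Mapping.lookup x k"
    by (cases "k \<in> Poly_Mapping.keys x") (auto simp: lookup_single when_def in_keys_iff)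
  finally show "Poly_Mapping.lookup (lin (\<lambda>z. Poly_Mapping.single z (1::int)) x) k = Poly_Mapping.lookup x k" .
qed

lemma push_lin: "push h x = lin (\<lambda>z. Poly_Mapping.single (h z) (1::int)) x"
  by (simp add: push_def lin_def zsmul_frag_of)

lemma mult_map_lin: "mult_map x = lin (\<lambda>z. fst z * snd z) x"
  by (simp add: mult_map_def lin_def)

definition subgrp :: "'a::ab_group_add set \<Rightarrow> bool" where
  "subgrp S \<longleftrightarrow> 0 \<in> S \<and> (\<forall>x\<in>S. \<forall>y\<in>S. x + y \<in> S) \<and> (\<forall>x\<in>S. - x \<in> S)"

lemma subgrp_0: "subgrp S \<Longrightarrow> 0 \<in> S" by (simp add: subgrp_def)
lemma subgrp_add: "subgrp S \<Longrightarrow> x \<in> S \<Longrightarrow> y \<in> S \<Longrightarrow> x + y \<in> S" by (simp add: subgrp_def)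
lemma subgrp_neg: "subgrp S \<Longrightarrow> x \<in> S \<Longrightarrow> - x \<in> S" by (simp add: subgrp_def)
lemma subgrp_diff: "subgrp S \<Longrightarrow> x \<in> S \<Longrightarrow> y \<in> S \<Longrightarrow> x - y \<in> S"
  by (metis diff_conv_add_uminus subgrp_add subgrp_neg)
lemma subgrp_sum: "subgrp S \<Longrightarrow> (\<And>a. a \<in> A \<Longrightarrow> f a \<in> S) \<Longrightarrow> sum f A \<in> S"
  by (induction A rule: infinite_finite_induct) (auto simp: subgrp_0 subgrp_add)
lemma subgrp_zsmul: "subgrp S \<Longrightarrow> x \<in> S \<Longrightarrow> zsmul k x \<in> S"
  unfolding zsmul_def by (intro subgrp_diff subgrp_sum) auto
lemma subgrp_lin: "subgrp S \<Longrightarrow> (\<And>z. z \<in> Poly_Mapping.keys x \<Longrightarrow> h z \<in> S) \<Longrightarrow> lin h x \<in> S"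
  unfolding lin_def by (intro subgrp_sum subgrp_zsmul) auto
lemma subgrp_lin_cong: "subgrp S \<Longrightarrow> (\<And>z. z \<in> Poly_Mapping.keys x \<Longrightarrow> h z - h' z \<in> S) \<Longrightarrow> lin h x - lin h' x \<in> S"
  using subgrp_lin[of S x "\<lambda>z. h z - h' z"] by (simp add: lin_fun_diff)
lemma subgrp_trans: "subgrp S \<Longrightarrow> x - y \<in> S \<Longrightarrow> y - z \<in> S \<Longrightarrow> x - z \<in> S"
  using subgrp_add[of S "x - y" "y - z"] by simp
lemma subgrp_sym: "subgrp S \<Longrightarrow> x - y \<in> S \<Longrightarrow> y - x \<in> S"
  using subgrp_neg[of S "x - y"] by simp
lemma subgrp_add_cong: "subgrp S \<Longrightarrow> x - y \<in> S \<Longrightarrow> x' - y' \<in> S \<Longrightarrow> (x + x') - (y + y') \<in> S"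
  using subgrp_add[of S "x - y" "x' - y'"] by (simp add: algebra_simps)
lemma subgrp_diff_cong: "subgrp S \<Longrightarrow> x - y \<in> S \<Longrightarrow> x' - y' \<in> S \<Longrightarrow> (x - x') - (y - y') \<in> S"
  using subgrp_diff[of S "x - y" "x' - y'"] by (simp add: algebra_simps)
lemma subgrp_sum_cong: "subgrp S \<Longrightarrow> (\<And>a. a \<in> A \<Longrightarrow> f a - g a \<in> S) \<Longrightarrow> sum f A - sum g A \<in> S"
  using subgrp_sum[of S A "\<lambda>a. f a - g a"] by (simp add: sum_subtractf)
lemma subgrp_zsmul_cong: "subgrp S \<Longrightarrow> x - y \<in> S \<Longrightarrow> zsmul k x - zsmul k y \<in> S"
  using subgrp_zsmul[of S "x - y" k] by (simp add: zsmul_right_diff)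

lemma subgrp_tensor_rel: "subgrp (tensor_rel M N r l)"
  by (simp add: subgrp_def tensor_rel.intros)

lemma addmod_zsmul:
  assumes S: "subgrp S" and h: "\<And>x y. h (x + y) - (h x + h y) \<in> S"
  shows "h (zsmul k x) - zsmul k (h x) \<in> S"
proof -
  have h0: "h 0 \<in> S" using h[of 0 0] subgrp_neg[OF S, of "- h 0"] by simp
  have n: "h (\<Sum>i<m. x) - (\<Sum>i<m. h x) \<in> S" for m :: nat
  proof (induction m)
    case 0 then show ?case using h0 by simp
  next
    case (Suc m)
    have "h ((\<Sum>i<m. x) + x) - (h (\<Sum>i<m. x) + h x) \<in> S" by (rule h)
    moreover have "(h (\<Sum>i<m. x) + h x) - ((\<Sum>i<m. h x) + h x) \<in> S"
      using Suc by simp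
    ultimately show ?case using subgrp_trans[OF S] by (simp add: add.commute)
  qed
  have nd: "h (a - b) - (h a - h b) \<in> S" for a b
    using subgrp_neg[OF S h[of "a - b" b]] by (simp add: algebra_simps)
  have "h (zsmul k x) - (h (\<Sum>i<nat k. x) - h (\<Sum>i<nat (-k). x)) \<in> S"
    unfolding zsmul_def by (rule nd)
  moreover have "(h (\<Sum>i<nat k. x) - h (\<Sum>i<nat (-k). x)) - zsmul k (h x) \<in> S"
    unfolding zsmul_def by (rule subgrp_diff_cong[OF S n n])
  ultimately show ?thesis using subgrp_trans[OF S] by blast
qed

lemma pm_expand: "(g :: 'x \<Rightarrow>\<^sub>0 'a::comm_monoid_add) = (\<Sum>k\<in>Poly_Mapping.keys g. Poly_Mapping.single k (Poly_Mapping.lookup g k))"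
proof (rule poly_mapping_eqI)
  fix j
  show "Poly_Mapping.lookup g j = Poly_Mapping.lookup (\<Sum>k\<in>Poly_Mapping.keys g. Poly_Mapping.single k (Poly_Mapping.lookup g k)) j"
    by (cases "j \<in> Poly_Mapping.keys g") (auto simp: lookup_sum lookup_single when_def in_keys_iff)
qed

lemma lookup_map0: "f 0 = 0 \<Longrightarrow> Poly_Mapping.lookup (Poly_Mapping.map f p) k = f (Poly_Mapping.lookup p k)"
  by (simp add: Poly_Mapping.map.rep_eq when_def)

lemma keys_map_sub: "Poly_Mapping.keys (Poly_Mapping.map f p) \<subseteq> Poly_Mapping.keys p"
  by (auto simp: in_keys_iff Poly_Mapping.map.rep_eq when_def)

lemma aug_r_superset:
  assumes "\<And>x. act x 0 = 0" "finite S" "Poly_Mapping.keys f \<subseteq> S"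
  shows "aug_r act f = (\<Sum>x\<in>S. act x (Poly_Mapping.lookup f x))"
  unfolding aug_r_def
  by (rule sum.mono_neutral_left) (use assms in \<open>auto simp: in_keys_iff\<close>)

lemma aug_r_add:
  assumes "\<And>x a b. act x (a + b) = act x a + act x b"
  shows "aug_r act (f + g) = aug_r act f + aug_r act g"
proof -
  have z: "\<And>x. act x 0 = 0" using assms[of _ 0 0] by simp
  let ?S = "Poly_Mapping.keys f \<union> Poly_Mapping.keys g"
  have fS: "finite ?S" by simp
  have ks: "Poly_Mapping.keys (f+g) \<subseteq> ?S" by (rule keys_add)
  have "aug_r act (f + g) = (\<Sum>x\<in>?S. act x (Poly_Mapping.lookup (f+g) x))"
    by (rule aug_r_superset[where act=act, OF z fS ks])
  also have "\<dots> = aug_r act f + aug_r act g"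
    by (simp add: lookup_add assms sum.distrib aug_r_superset[where act=act, OF z fS])
  finally show ?thesis .
qed

lemma aug_r_single:
  assumes "\<And>x. act x 0 = 0"
  shows "aug_r act (Poly_Mapping.single x c) = act x c"
  by (cases "c = 0") (simp_all add: aug_r_def assms)

lemma aug_l_r: "aug_l act f = aug_r (\<lambda>x s. act s x) f"
  by (simp add: aug_l_def aug_r_def)

lemma umult_fst [simp]: "fst (umult a b) = fst a * fst b" by (simp add: umult_def)
lemma umult_one_left [simp]: "umult (1, 0) c = c" by (simp add: umult_def)
lemma umult_one_right [simp]: "umult c (1, 0) = c" by (simp add: umult_def)
lemma umult_zero_left [simp]: "umult 0 c = 0" by (simp add: umult_def zero_prod_def)
lemma umult_zero_right [simp]: "umult c 0 = 0" by (simp add: umult_def zero_prod_def)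
lemma umult_add_left: "umult (a + b) c = umult a c + umult b c"
  by (simp add: umult_def zsmul_add zsmul_right_add algebra_simps)
lemma umult_add_right: "umult c (a + b) = umult c a + umult c b"
  by (simp add: umult_def zsmul_add zsmul_right_add algebra_simps)

lemma free_ract_single [simp]: "free_ract (Poly_Mapping.single k c) s = Poly_Mapping.single k (umult c s)"
  by (simp add: free_ract_def)
lemma free_lact_single [simp]: "free_lact s (Poly_Mapping.single k c) = Poly_Mapping.single k (umult s c)"
  by (simp add: free_lact_def)
lemma lookup_free_ract: "Poly_Mapping.lookup (free_ract f s) k = umult (Poly_Mapping.lookup f k) s"
  by (simp add: free_ract_def lookup_map0)
lemma lookup_free_lact: "Poly_Mapping.lookup (free_lact s f) k = umult s (Poly_Mapping.lookup f k)"
  by (simp add: free_lact_def lookup_map0)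
lemma keys_free_ract: "Poly_Mapping.keys (free_ract f s) \<subseteq> Poly_Mapping.keys f"
  by (simp add: free_ract_def keys_map_sub)
lemma keys_free_lact: "Poly_Mapping.keys (free_lact s f) \<subseteq> Poly_Mapping.keys f"
  by (simp add: free_lact_def keys_map_sub)
lemma free_ract_add: "free_ract (f + g) s = free_ract f s + free_ract g s"
  by (rule poly_mapping_eqI) (simp add: lookup_free_ract lookup_add umult_add_left)
lemma free_ract_add2: "free_ract f (s + t) = free_ract f s + free_ract f t"
  by (rule poly_mapping_eqI) (simp add: lookup_free_ract lookup_add umult_add_right)
lemma free_lact_add: "free_lact s (f + g) = free_lact s f + free_lact s g"
  by (rule poly_mapping_eqI) (simp add: lookup_free_lact lookup_add umult_add_right)
lemma free_lact_add2: "free_lact (s + t) f = free_lact s f + free_lact t f"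
  by (rule poly_mapping_eqI) (simp add: lookup_free_lact lookup_add umult_add_left)
lemma free_ract_zero [simp]: "free_ract 0 s = 0"
  by (rule poly_mapping_eqI) (simp add: lookup_free_ract)
lemma free_lact_zero [simp]: "free_lact s 0 = 0"
  by (rule poly_mapping_eqI) (simp add: lookup_free_lact)
lemma free_ract_zero2 [simp]: "free_ract f 0 = 0"
  by (rule poly_mapping_eqI) (simp add: lookup_free_ract)
lemma free_lact_zero2 [simp]: "free_lact 0 f = 0"
  by (rule poly_mapping_eqI) (simp add: lookup_free_lact)

definition ef :: "('x \<Rightarrow>\<^sub>0 'r::ring unitz) \<Rightarrow> ('x \<Rightarrow>\<^sub>0 int)" where
  "ef f = Poly_Mapping.map fst f"

lemma lookup_ef [simp]: "Poly_Mapping.lookup (ef f) k = fst (Poly_Mapping.lookup f k)"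
  by (simp add: ef_def lookup_map0)
lemma keys_ef: "Poly_Mapping.keys (ef f) \<subseteq> Poly_Mapping.keys f"
  by (simp add: ef_def keys_map_sub)
lemma ef_add: "ef (f + g) = ef f + ef g"
  by (rule poly_mapping_eqI) (simp add: lookup_add)
lemma additive_ef: "additive ef" by (simp add: additive_def ef_add)
lemma ef_single [simp]: "ef (Poly_Mapping.single k c) = Poly_Mapping.single k (fst c)"
  by (rule poly_mapping_eqI) (simp add: lookup_single when_def)
lemma ef_free_ract: "ef (free_ract f s) = zsmul (fst s) (ef f)"
  by (rule poly_mapping_eqI) (simp add: lookup_free_ract mult.commute)
lemma ef_free_lact: "ef (free_lact s f) = zsmul (fst s) (ef f)"
  by (rule poly_mapping_eqI) (simp add: lookup_free_lact)

section \<open>Consequences of t-unitality\<close>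

lemma tunital_closed:
  assumes t: "t_unital TYPE('r::ring)" and S: "subgrp (S::'r set)" and p: "\<And>a b. a * b \<in> S"
  shows "r \<in> S"
proof -
  obtain x where "mult_map x = r" using t unfolding t_unital_def by blast
  moreover have "mult_map x \<in> S" unfolding mult_map_lin by (rule subgrp_lin[OF S]) (simp add: p)
  ultimately show ?thesis by simp
qed

lemma tensor_zero_generic:
  fixes ract :: "'r::ring \<Rightarrow> 's \<Rightarrow> 'r" and lact :: "'s \<Rightarrow> 'n::ab_group_add \<Rightarrow> 'n"
  assumes t: "t_unital TYPE('r)" and ex: "\<And>a b n. \<exists>s. ract a s = a * b \<and> lact s n = 0"
  shows "tensor_is_zero (UNIV::'r set) (UNIV::'n set) ract lact"
proof -
  let ?T = "tensor_rel (UNIV::'r set) (UNIV::'n set) ract lact"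
  have T: "subgrp ?T" by (rule subgrp_tensor_rel)
  have a0: "Poly_Mapping.single (a, 0) 1 \<in> ?T" for a
    using subgrp_neg[OF T tensor_rel.rel_radd[of a UNIV 0 UNIV 0 ract lact]] by simp
  have z0: "Poly_Mapping.single (0, n) 1 \<in> ?T" for n
    using subgrp_neg[OF T tensor_rel.rel_ladd[of 0 UNIV 0 n UNIV ract lact]] by simp
  let ?S = "{a. \<forall>n. Poly_Mapping.single (a, n) (1::int) \<in> ?T}"
  have S: "subgrp ?S"
    unfolding subgrp_def
  proof (intro conjI ballI)
    show "0 \<in> ?S" using z0 by simp
  next
    fix a b assume "a \<in> ?S" "b \<in> ?S"
    then have "Poly_Mapping.single (a, n) (1::int) \<in> ?T" "Poly_Mapping.single (b, n) (1::int) \<in> ?T" for n by auto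
    then have "(Poly_Mapping.single (a + b, n) 1 - Poly_Mapping.single (a, n) 1 - Poly_Mapping.single (b, n) 1)
       + Poly_Mapping.single (a, n) 1 + Poly_Mapping.single (b, n) (1::int) \<in> ?T" for n
      by (intro subgrp_add[OF T] tensor_rel.rel_ladd) auto
    then show "a + b \<in> ?S" by simp
  next
    fix a assume "a \<in> ?S"
    then have "Poly_Mapping.single (a, n) (1::int) \<in> ?T" for n by auto
    then have "Poly_Mapping.single (0, n) 1 - Poly_Mapping.single (a, n) 1
        - (Poly_Mapping.single (a + - a, n) 1 - Poly_Mapping.single (a, n) 1 - Poly_Mapping.single (- a, n) (1::int)) \<in> ?T" for n
      by (intro subgrp_diff[OF T] tensor_rel.rel_ladd z0) auto
    then show "- a \<in> ?S" by simp
  qed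
  have P: "a * b \<in> ?S" for a b
  proof -
    have "Poly_Mapping.single (a * b, n) (1::int) \<in> ?T" for n
    proof -
      obtain s where s: "ract a s = a * b" "lact s n = 0" using ex by blast
      have "(Poly_Mapping.single (ract a s, n) 1 - Poly_Mapping.single (a, lact s n) 1) + Poly_Mapping.single (a, 0) (1::int) \<in> ?T"
        by (intro subgrp_add[OF T] tensor_rel.rel_bal a0) auto
      then show ?thesis using s by simp
    qed
    then show ?thesis by simp
  qed
  have all: "Poly_Mapping.single z (1::int) \<in> ?T" for z
    using tunital_closed[OF t S P, of "fst z"] by (cases z) simp
  show ?thesis unfolding tensor_is_zero_def
  proof (intro allI impI)
    fix x :: "'r \<times> 'n \<Rightarrow>\<^sub>0 int"
    have "lin (\<lambda>z. Poly_Mapping.single z (1::int)) x \<in> ?T" by (rule subgrp_lin[OF T all])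
    then show "x \<in> ?T" by (simp add: lin_id)
  qed
qed

lemma hom_zero_generic:
  fixes lactP :: "'s \<Rightarrow> 'r::ring \<Rightarrow> 'r" and lactN :: "'s \<Rightarrow> 'n::ab_group_add \<Rightarrow> 'n"
  assumes t: "t_unital TYPE('r)" and ex: "\<And>a b. \<exists>s. lactP s b = a * b \<and> (\<forall>y. lactN s y = 0)"
    and h: "is_hom (UNIV::'r set) (UNIV::'n set) lactP lactN f"
  shows "f a = 0"
proof -
  have ad: "additive f" using h by (simp add: is_hom_def additive_def)
  let ?S = "{a. f a = 0}"
  have S: "subgrp ?S" by (simp add: subgrp_def additive_0[OF ad] ad[unfolded additive_def] additive_neg[OF ad])
  have P: "a * b \<in> ?S" for a b
  proof -
    obtain s where s: "lactP s b = a * b" "\<forall>y. lactN s y = 0" using ex by blast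
    have "f (lactP s b) = lactN s (f b)" using h by (simp add: is_hom_def)
    then show ?thesis using s by simp
  qed
  show ?thesis using tunital_closed[OF t S P] by simp
qed

lemma lact_mod_null: "null_module smul \<Longrightarrow> lact_mod smul = (\<lambda>s x. zsmul (fst s) x)"
  by (simp add: fun_eq_iff lact_mod_def null_module_def)

definition addon :: "'a::ab_group_add set \<Rightarrow> ('a \<Rightarrow> 'b::ab_group_add) \<Rightarrow> bool" where
  "addon K u \<longleftrightarrow> (\<forall>x\<in>K. \<forall>y\<in>K. u (x + y) = u x + u y)"

lemma addon_0: "subgrp K \<Longrightarrow> addon K u \<Longrightarrow> u 0 = 0"
  unfolding addon_def using subgrp_0 by (metis add.right_neutral add_left_cancel)
lemma addon_neg: "subgrp K \<Longrightarrow> addon K u \<Longrightarrow> x \<in> K \<Longrightarrow> u (- x) = - u x"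
proof -
  assume K: "subgrp K" and u: "addon K u" and x: "x \<in> K"
  have "u (x + - x) = u x + u (- x)" using u x subgrp_neg[OF K x] unfolding addon_def by blast
  then show ?thesis using addon_0[OF K u] by (simp add: eq_neg_iff_add_eq_0 add.commute)
qed
lemma addon_diff: "subgrp K \<Longrightarrow> addon K u \<Longrightarrow> x \<in> K \<Longrightarrow> y \<in> K \<Longrightarrow> u (x - y) = u x - u y"
proof -
  assume K: "subgrp K" and u: "addon K u" and x: "x \<in> K" and y: "y \<in> K"
  have "u (x + - y) = u x + u (- y)" using u x subgrp_neg[OF K y] unfolding addon_def by blast
  then show ?thesis using addon_neg[OF K u y] by simp
qed
lemma addon_sum: "subgrp K \<Longrightarrow> addon K u \<Longrightarrow> (\<And>a. a \<in> A \<Longrightarrow> f a \<in> K) \<Longrightarrow> u (sum f A) = (\<Sum>a\<in>A. u (f a))"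
proof (induction A rule: infinite_finite_induct)
  case (infinite A) then show ?case using addon_0 by simp
next
  case empty then show ?case using addon_0 by simp
next
  case (insert a A)
  then have "u (f a + sum f A) = u (f a) + u (sum f A)"
    unfolding addon_def by (meson insertCI subgrp_sum)
  then show ?case using insert by simp
qed
lemma addon_zsmul: "subgrp K \<Longrightarrow> addon K u \<Longrightarrow> x \<in> K \<Longrightarrow> u (zsmul k x) = zsmul k (u x)"
  unfolding zsmul_def by (simp add: addon_diff addon_sum subgrp_sum)
lemma addon_lin: "subgrp K \<Longrightarrow> addon K u \<Longrightarrow> (\<And>z. z \<in> Poly_Mapping.keys x \<Longrightarrow> h z \<in> K) \<Longrightarrow>
    u (lin h x) = lin (\<lambda>z. u (h z)) x"
  unfolding lin_def by (simp add: addon_sum addon_zsmul subgrp_zsmul)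

lemma subgrp_free_car: "subgrp (free_car K)"
  unfolding subgrp_def free_car_def using keys_add by fastforce

lemma free_car_UNIV [simp]: "free_car UNIV = UNIV" by (simp add: free_car_def)

lemma additive_free_lact: "additive (free_lact s)" by (simp add: additive_def free_lact_add)
lemma additive_free_ract: "additive (\<lambda>f. free_ract f s)" by (simp add: additive_def free_ract_add)

lemma free_lact_one [simp]: "free_lact (1, 0) f = f"
  by (rule poly_mapping_eqI) (simp add: lookup_free_lact)
lemma free_ract_one [simp]: "free_ract f (1, 0) = f"
  by (rule poly_mapping_eqI) (simp add: lookup_free_ract)

lemma zsmul_comm: "zsmul a (zsmul b x) = zsmul b (zsmul a x)"
  by (metis zsmul_mult mult.commute)

lemma lact_R_assoc: "lact_R (umult s c) a = lact_R s (lact_R c a)"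
  by (simp add: lact_R_def umult_def zsmul_add zsmul_right_add zsmul_mult zsmul_mult_left
      zsmul_mult_right algebra_simps zsmul_comm[of "fst c"])
lemma ract_R_assoc: "ract_R a (umult c s) = ract_R (ract_R a c) s"
  by (simp add: ract_R_def umult_def zsmul_add zsmul_right_add zsmul_mult zsmul_mult_left
      zsmul_mult_right algebra_simps zsmul_comm[of "fst c"])
lemma unitz_one_ne_zero [simp]: "((1::int), (0::'r::ring)) \<noteq> 0" by (simp add: zero_prod_def)

lemma lact_R_add: "lact_R (s + t) a = lact_R s a + lact_R t a"
  by (simp add: lact_R_def zsmul_add algebra_simps)
lemma lact_R_add2: "lact_R s (a + b) = lact_R s a + lact_R s b"
  by (simp add: lact_R_def zsmul_right_add algebra_simps)
lemma ract_R_add: "ract_R a (s + t) = ract_R a s + ract_R a t"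
  by (simp add: ract_R_def zsmul_add algebra_simps)
lemma ract_R_add2: "ract_R (a + b) s = ract_R a s + ract_R b s"
  by (simp add: ract_R_def zsmul_right_add algebra_simps)
lemma lact_R_zero [simp]: "lact_R 0 a = 0" by (simp add: lact_R_def zero_prod_def)
lemma lact_R_zero2 [simp]: "lact_R s 0 = 0" by (simp add: lact_R_def)
lemma ract_R_zero [simp]: "ract_R a 0 = 0" by (simp add: ract_R_def zero_prod_def)
lemma ract_R_zero2 [simp]: "ract_R 0 s = 0" by (simp add: ract_R_def)
lemma lact_R_one [simp]: "lact_R (1, 0) a = a" by (simp add: lact_R_def)
lemma ract_R_one [simp]: "ract_R a (1, 0) = a" by (simp add: ract_R_def)

section \<open>Ext\<close>

lemma Ext_part:
  fixes smul :: "'r::ring \<Rightarrow> 'n::ab_group_add \<Rightarrow> 'n"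
  assumes t: "t_unital TYPE('r)" and nm: "null_module smul"
  shows "Ext1_vanishes (UNIV::'r set) lact_R (UNIV::'n set) (lact_mod smul)"
proof -
  define d0 :: "('r \<Rightarrow>\<^sub>0 'r unitz) \<Rightarrow> 'r" where "d0 = aug_l lact_R"
  define d1 :: "(('r \<Rightarrow>\<^sub>0 'r unitz) \<Rightarrow>\<^sub>0 'r unitz) \<Rightarrow> ('r \<Rightarrow>\<^sub>0 'r unitz)" where "d1 = aug_l free_lact"
  define d2 :: "((('r \<Rightarrow>\<^sub>0 'r unitz) \<Rightarrow>\<^sub>0 'r unitz) \<Rightarrow>\<^sub>0 'r unitz) \<Rightarrow> (('r \<Rightarrow>\<^sub>0 'r unitz) \<Rightarrow>\<^sub>0 'r unitz)" where "d2 = aug_l free_lact"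
  have d2_single [simp]: "d2 (Poly_Mapping.single a c) = free_lact c a" for a c
    unfolding d2_def aug_l_r by (rule aug_r_single) simp
  define K0 where "K0 = {f \<in> (UNIV :: ('r \<Rightarrow>\<^sub>0 'r unitz) set). d0 f = 0}"
  define P1 where "P1 = (free_car K0 :: (('r \<Rightarrow>\<^sub>0 'r unitz) \<Rightarrow>\<^sub>0 'r unitz) set)"
  define K1 where "K1 = {g \<in> P1. d1 g = 0}"
  define P2 where "P2 = (free_car K1 :: ((('r \<Rightarrow>\<^sub>0 'r unitz) \<Rightarrow>\<^sub>0 'r unitz) \<Rightarrow>\<^sub>0 'r unitz) set)"
  define e :: "('r \<Rightarrow>\<^sub>0 'r unitz) \<Rightarrow> (('r \<Rightarrow>\<^sub>0 'r unitz) \<Rightarrow>\<^sub>0 'r unitz)" where "e k = Poly_Mapping.single k (1, 0)" for k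
  define e0 :: "'r \<Rightarrow> ('r \<Rightarrow>\<^sub>0 'r unitz)" where "e0 a = Poly_Mapping.single a (1, 0)" for a
  have lact: "lact_mod smul = (\<lambda>s x. zsmul (fst s) x)" by (rule lact_mod_null[OF nm])
  have d0_add: "d0 (f + g) = d0 f + d0 g" for f g
    unfolding d0_def aug_l_r by (rule aug_r_add) (simp add: lact_R_add)
  have ad0: "additive d0" by (simp add: additive_def d0_add)
  have d0_single [simp]: "d0 (Poly_Mapping.single a c) = lact_R c a" for a c
    unfolding d0_def aug_l_r by (rule aug_r_single) simp
  have d0_lact: "d0 (free_lact s f) = lact_R s (d0 f)" for s f
  proof -
    have "d0 (free_lact s f) = d0 (free_lact s (\<Sum>k\<in>Poly_Mapping.keys f. Poly_Mapping.single k (Poly_Mapping.lookup f k)))"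
      by (subst pm_expand[of f]) simp
    also have "\<dots> = (\<Sum>k\<in>Poly_Mapping.keys f. lact_R s (lact_R (Poly_Mapping.lookup f k) k))"
      by (simp add: additive_sum[OF additive_free_lact] additive_sum[OF ad0] lact_R_assoc)
    also have "\<dots> = lact_R s (\<Sum>k\<in>Poly_Mapping.keys f. lact_R (Poly_Mapping.lookup f k) k)"
      by (rule additive_sum[symmetric]) (simp add: additive_def lact_R_add2)
    also have "\<dots> = lact_R s (d0 f)"
      by (simp add: d0_def aug_l_def)
    finally show ?thesis .
  qed
  have d1_add: "d1 (f + g) = d1 f + d1 g" for f g
    unfolding d1_def aug_l_r by (rule aug_r_add) (simp add: free_lact_add2)
  have d1_single [simp]: "d1 (Poly_Mapping.single a c) = free_lact c a" for a c
    unfolding d1_def aug_l_r by (rule aug_r_single) simp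
  have ad1: "additive d1" by (simp add: additive_def d1_add)
  have K0: "subgrp K0" unfolding K0_def subgrp_def using additive_0[OF ad0] additive_neg[OF ad0] d0_add by auto
  have P1: "subgrp P1" unfolding P1_def by (rule subgrp_free_car)
  have K0_lact: "free_lact s k \<in> K0" if "k \<in> K0" for s k using that by (simp add: K0_def d0_lact)
  have eP1: "e k \<in> P1" if "k \<in> K0" for k using that by (simp add: P1_def free_car_def e_def)
  have P2I: "Poly_Mapping.single q (1,0) \<in> P2" if "q \<in> P1" "d1 q = 0" for q
    using that by (simp add: P2_def K1_def free_car_def)
  show ?thesis
    unfolding Ext1_vanishes_def Let_def lact
    unfolding d0_def[symmetric] d1_def[symmetric] d2_def[symmetric] K0_def[symmetric] free_car_UNIV
      P1_def[symmetric] K1_def[symmetric] P2_def[symmetric]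
  proof (intro allI impI)
    fix \<phi> :: "(('r \<Rightarrow>\<^sub>0 'r unitz) \<Rightarrow>\<^sub>0 'r unitz) \<Rightarrow> 'n"
    assume "is_hom P1 UNIV free_lact (\<lambda>s. zsmul (fst s)) \<phi> \<and> (\<forall>q\<in>P2. \<phi> (d2 q) = 0)"
    then have h: "is_hom P1 UNIV free_lact (\<lambda>s. zsmul (fst s)) \<phi>" and b: "\<And>q. q \<in> P2 \<Longrightarrow> \<phi> (d2 q) = 0"
      by auto
    have aphi: "addon P1 \<phi>" using h by (simp add: is_hom_def addon_def)
    have phi_lact: "\<phi> (free_lact s p) = zsmul (fst s) (\<phi> p)" if "p \<in> P1" for s p
      using h that unfolding is_hom_def by (cases s) simp
    define u where "u k = \<phi> (e k)" for k
    have u_add: "u (k + l) = u k + u l" if "k \<in> K0" "l \<in> K0" for k l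
    proof -
      let ?q = "e (k + l) - e k - e l"
      have kl: "k + l \<in> K0" using subgrp_add[OF K0 that] .
      have q1: "?q \<in> P1" by (intro subgrp_diff[OF P1] eP1 kl that)
      have "d1 ?q = 0" by (simp add: additive_diff[OF ad1] e_def)
      then have "\<phi> (d2 (Poly_Mapping.single ?q (1,0))) = 0" by (intro b P2I q1)
      then have "\<phi> ?q = 0" by simp
      then show ?thesis
        unfolding u_def using addon_diff[OF P1 aphi] q1 eP1 kl that subgrp_diff[OF P1]
        by (metis diff_eq_eq add_diff_cancel_left' diff_add_cancel eq_iff_diff_eq_0)
    qed
    have au: "addon K0 u" using u_add by (simp add: addon_def)
    have u_lact: "u (free_lact s k) = zsmul (fst s) (u k)" if "k \<in> K0" for s k
    proof -
      let ?q = "e (free_lact s k) - free_lact s (e k)"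
      have sk: "free_lact s k \<in> K0" using K0_lact[OF that] .
      have fe: "free_lact s (e k) \<in> P1" using eP1[OF that] by (simp add: e_def P1_def free_car_def)
      have q1: "?q \<in> P1" by (intro subgrp_diff[OF P1] eP1 sk fe)
      have "d1 ?q = 0" by (simp add: additive_diff[OF ad1] e_def)
      then have "\<phi> (d2 (Poly_Mapping.single ?q (1,0))) = 0" by (intro b P2I q1)
      then have "\<phi> ?q = 0" by simp
      then have "\<phi> (e (free_lact s k)) = \<phi> (free_lact s (e k))"
        using addon_diff[OF P1 aphi eP1[OF sk] fe] by simp
      then show ?thesis unfolding u_def using phi_lact[OF eP1[OF that]] by simp
    qed
    have phi_expand: "\<phi> p = lin u (ef p)" if "p \<in> P1" for p
    proof -
      have ks: "Poly_Mapping.keys p \<subseteq> K0" using that by (simp add: P1_def free_car_def)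
      have one: "\<phi> (Poly_Mapping.single k c) = zsmul (fst c) (u k)" if "k \<in> K0" for k c
      proof -
        have "Poly_Mapping.single k c = free_lact c (e k)" by (simp add: e_def)
        then have "\<phi> (Poly_Mapping.single k c) = \<phi> (free_lact c (e k))" by simp
        also have "\<dots> = zsmul (fst c) (u k)" using phi_lact[OF eP1[OF that]] by (simp add: u_def)
        finally show ?thesis .
      qed
      have sP: "Poly_Mapping.single k c \<in> P1" if "k \<in> K0" for k c
        using that by (simp add: P1_def free_car_def)
      have "\<phi> p = \<phi> (\<Sum>k\<in>Poly_Mapping.keys p. Poly_Mapping.single k (Poly_Mapping.lookup p k))"
        by (subst pm_expand[of p]) simp
      also have "\<dots> = (\<Sum>k\<in>Poly_Mapping.keys p. \<phi> (Poly_Mapping.single k (Poly_Mapping.lookup p k)))"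
        using ks by (intro addon_sum[OF P1 aphi] sP) auto
      also have "\<dots> = (\<Sum>k\<in>Poly_Mapping.keys p. zsmul (fst (Poly_Mapping.lookup p k)) (u k))"
        using ks by (intro sum.cong refl one) auto
      also have "\<dots> = lin u (ef p)"
        by (subst lin_superset[of "Poly_Mapping.keys p"]) (simp_all add: keys_ef)
      finally show ?thesis .
    qed
    have sec: "\<exists>f. d0 f = r \<and> ef f = 0" for r
    proof -
      let ?S = "{r. \<exists>f. d0 f = r \<and> ef f = 0}"
      have S: "subgrp ?S" unfolding subgrp_def
      proof (intro conjI ballI)
        show "0 \<in> ?S" by (rule CollectI, rule exI[of _ 0]) (simp add: additive_0[OF ad0] additive_0[OF additive_ef])
        fix x y assume "x \<in> ?S" "y \<in> ?S"
        then obtain f g where "d0 f = x" "ef f = 0" "d0 g = y" "ef g = 0" by auto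
        then show "x + y \<in> ?S" by (intro CollectI exI[of _ "f + g"]) (simp add: d0_add ef_add)
      next
        fix x assume "x \<in> ?S"
        then obtain f where "d0 f = x" "ef f = 0" by auto
        then show "- x \<in> ?S" by (intro CollectI exI[of _ "- f"]) (simp add: additive_neg[OF ad0] additive_neg[OF additive_ef])
      qed
      have P: "a * b \<in> ?S" for a b
        by (intro CollectI exI[of _ "Poly_Mapping.single b (0, a)"]) (simp add: lact_R_def)
      show ?thesis using tunital_closed[OF t S P] by simp
    qed
    define s where "s a = e0 a - (SOME f. d0 f = a \<and> ef f = 0)" for a
    have s_prop: "s a \<in> K0 \<and> ef (s a) = Poly_Mapping.single a 1" for a
    proof -
      have "d0 (SOME f. d0 f = a \<and> ef f = 0) = a \<and> ef (SOME f. d0 f = a \<and> ef f = 0) = 0"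
        by (rule someI_ex) (rule sec)
      then show ?thesis unfolding s_def K0_def e0_def
        by (simp add: additive_diff[OF ad0] additive_diff[OF additive_ef])
    qed
    define \<psi> :: "('r \<Rightarrow>\<^sub>0 'r unitz) \<Rightarrow> 'n" where "\<psi> f = lin (\<lambda>a. u (s a)) (ef f)" for f
    have psi_add: "\<psi> (f + g) = \<psi> f + \<psi> g" for f g by (simp add: \<psi>_def ef_add lin_add)
    have apsi: "additive \<psi>" by (simp add: additive_def psi_add)
    have psi_lact: "\<psi> (free_lact c f) = zsmul (fst c) (\<psi> f)" for c f
      by (simp add: \<psi>_def ef_free_lact lin_zsmul)
    \<comment> \<open>key: u vanishes on K0 \<inter> ker ef\<close>
    define Tm :: "'r \<times> 'r \<Rightarrow> ('r \<Rightarrow>\<^sub>0 'r unitz)" where "Tm z = Poly_Mapping.single (snd z) (0, fst z)" for z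
    have gen: "free_lact (0, m) j \<in> K0 \<and> u (free_lact (0, m) j) = 0" if "j \<in> K0" for m j
      using K0_lact[OF that] u_lact[OF that] by simp
    have key: "lin Tm w \<in> K0 \<and> u (lin Tm w) = 0" if "w \<in> tensor_rel UNIV UNIV (*) (*)" for w
      using that
    proof (induction rule: tensor_rel.induct)
      case rel_zero
      then show ?case using subgrp_0[OF K0] addon_0[OF K0 au] by simp
    next
      case (rel_add x y)
      then show ?case using subgrp_add[OF K0] au by (simp add: lin_add addon_def)
    next
      case (rel_neg x)
      then show ?case using subgrp_neg[OF K0] addon_neg[OF K0 au] by (simp add: lin_neg)
    next
      case (rel_ladd m m' n)
      have "lin Tm (Poly_Mapping.single (m + m', n) 1 - Poly_Mapping.single (m, n) 1 - Poly_Mapping.single (m', n) 1) = 0"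
        by (simp add: lin_diff Tm_def single_add[symmetric] single_diff[symmetric])
      then show ?case using subgrp_0[OF K0] addon_0[OF K0 au] by simp
    next
      case (rel_radd m n n')
      let ?j = "e0 (n + n') - e0 n - e0 n'"
      have j: "?j \<in> K0" by (simp add: K0_def e0_def additive_diff[OF ad0])
      have "lin Tm (Poly_Mapping.single (m, n + n') 1 - Poly_Mapping.single (m, n) 1 - Poly_Mapping.single (m, n') 1)
            = free_lact (0, m) ?j"
        by (simp add: lin_diff Tm_def e0_def additive_diff[OF additive_free_lact] umult_def)
      then show ?case using gen[OF j] by simp
    next
      case (rel_bal m n s)
      let ?j = "Poly_Mapping.single n (0, s) - e0 (s * n)"
      have j: "?j \<in> K0" by (simp add: K0_def e0_def additive_diff[OF ad0] lact_R_def)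
      have "lin Tm (Poly_Mapping.single (m * s, n) 1 - Poly_Mapping.single (m, s * n) 1)
            = free_lact (0, m) ?j"
        by (simp add: lin_diff Tm_def e0_def additive_diff[OF additive_free_lact] umult_def)
      then show ?case using gen[OF j] by simp
    qed
    have ker: "u k = 0" if "k \<in> K0" "ef k = 0" for k
    proof -
      have fst0: "fst (Poly_Mapping.lookup k a) = 0" for a
        using arg_cong[OF that(2), of "\<lambda>p. Poly_Mapping.lookup p a"] by simp
      define w where "w = (\<Sum>a\<in>Poly_Mapping.keys k. Poly_Mapping.single (snd (Poly_Mapping.lookup k a), a) (1::int))"
      have "lin Tm w = (\<Sum>a\<in>Poly_Mapping.keys k. Poly_Mapping.single a (0, snd (Poly_Mapping.lookup k a)))"
        by (simp add: w_def lin_sum Tm_def)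
      also have "\<dots> = (\<Sum>a\<in>Poly_Mapping.keys k. Poly_Mapping.single a (Poly_Mapping.lookup k a))"
      proof (rule sum.cong)
        fix a
        have "(0, snd (Poly_Mapping.lookup k a)) = Poly_Mapping.lookup k a"
          using fst0[of a] by (simp add: prod_eq_iff)
        then show "Poly_Mapping.single a (0, snd (Poly_Mapping.lookup k a)) = Poly_Mapping.single a (Poly_Mapping.lookup k a)"
          by simp
      qed simp
      also have "\<dots> = k" by (rule pm_expand[symmetric])
      finally have wk: "lin Tm w = k" .
      have "mult_map w = (\<Sum>a\<in>Poly_Mapping.keys k. snd (Poly_Mapping.lookup k a) * a)"
        by (simp add: mult_map_lin w_def lin_sum)
      also have "\<dots> = d0 k"
        by (simp add: d0_def aug_l_def lact_R_def fst0)
      finally have "mult_map w = 0" using that(1) by (simp add: K0_def)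
      then have "w \<in> tensor_rel UNIV UNIV (*) (*)" using t by (simp add: t_unital_def)
      then show ?thesis using key wk by metis
    qed
    have u_psi: "u k = \<psi> k" if "k \<in> K0" for k
    proof -
      let ?l = "lin s (ef k)"
      have l: "?l \<in> K0" by (rule subgrp_lin[OF K0]) (use s_prop in blast)
      have "ef ?l = lin (\<lambda>a. Poly_Mapping.single a 1) (ef k)"
        by (simp add: lin_hom[OF additive_ef] s_prop)
      then have efl: "ef ?l = ef k" by (simp add: lin_id)
      have "u (k - ?l) = 0"
        by (rule ker) (simp_all add: subgrp_diff[OF K0 that l] additive_diff[OF additive_ef] efl)
      then have "u k = u ?l" using addon_diff[OF K0 au that l] by simp
      also have "\<dots> = lin (\<lambda>a. u (s a)) (ef k)" by (rule addon_lin[OF K0 au]) (use s_prop in blast)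
      finally show ?thesis by (simp add: \<psi>_def)
    qed
    show "\<exists>\<psi>. is_hom UNIV UNIV free_lact (\<lambda>s. zsmul (fst s)) \<psi> \<and> (\<forall>p\<in>P1. \<phi> p = \<psi> (d1 p))"
    proof (intro exI conjI ballI)
      show "is_hom UNIV UNIV free_lact (\<lambda>s. zsmul (fst s)) \<psi>"
        by (simp add: is_hom_def psi_add psi_lact)
      fix p assume p: "p \<in> P1"
      have ks: "Poly_Mapping.keys p \<subseteq> K0" using p by (simp add: P1_def free_car_def)
      have "\<psi> (d1 p) = (\<Sum>k\<in>Poly_Mapping.keys p. zsmul (fst (Poly_Mapping.lookup p k)) (\<psi> k))"
        by (simp add: d1_def aug_l_def additive_sum[OF apsi] psi_lact)
      also have "\<dots> = (\<Sum>k\<in>Poly_Mapping.keys p. zsmul (fst (Poly_Mapping.lookup p k)) (u k))"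
        using ks u_psi by (intro sum.cong) auto
      also have "\<dots> = lin u (ef p)"
        by (subst lin_superset[of "Poly_Mapping.keys p"]) (simp_all add: keys_ef)
      finally show "\<phi> p = \<psi> (d1 p)" using phi_expand[OF p] by simp
    qed
  qed
qed

definition addmod :: "'a::ab_group_add set \<Rightarrow> 'b::ab_group_add set \<Rightarrow> ('a \<Rightarrow> 'b) \<Rightarrow> bool" where
  "addmod K S u \<longleftrightarrow> (\<forall>x\<in>K. \<forall>y\<in>K. u (x + y) - (u x + u y) \<in> S)"

lemma addmod_0: assumes K: "subgrp K" and S: "subgrp S" and u: "addmod K S u" shows "u 0 \<in> S"
proof -
  have "u (0 + 0) - (u 0 + u 0) \<in> S" using u subgrp_0[OF K] unfolding addmod_def by blast
  then show ?thesis using subgrp_neg[OF S, of "- u 0"] by simp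
qed

lemma addmod_neg: assumes K: "subgrp K" and S: "subgrp S" and u: "addmod K S u" and x: "x \<in> K"
  shows "u (- x) - (- u x) \<in> S"
proof -
  have a: "u (x + - x) - (u x + u (- x)) \<in> S" using u x subgrp_neg[OF K x] unfolding addmod_def by blast
  have eq: "u (- x) - (- u x) = - ((u (x + - x) - (u x + u (- x))) - u 0)" by (simp add: algebra_simps)
  show ?thesis unfolding eq by (rule subgrp_neg[OF S subgrp_diff[OF S a addmod_0[OF K S u]]])
qed

lemma addmod_diff: assumes K: "subgrp K" and S: "subgrp S" and u: "addmod K S u" and x: "x \<in> K" and y: "y \<in> K"
  shows "u (x - y) - (u x - u y) \<in> S"
proof -
  have a: "u (x + - y) - (u x + u (- y)) \<in> S" using u x subgrp_neg[OF K y] unfolding addmod_def by blast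
  have eq: "u (x - y) - (u x - u y) = (u (x + - y) - (u x + u (- y))) + (u (- y) - (- u y))" by (simp add: algebra_simps)
  show ?thesis unfolding eq by (rule subgrp_add[OF S a addmod_neg[OF K S u y]])
qed

lemma addmod_sum: assumes K: "subgrp K" and S: "subgrp S" and u: "addmod K S u"
  shows "(\<And>a. a \<in> A \<Longrightarrow> f a \<in> K) \<Longrightarrow> u (sum f A) - (\<Sum>a\<in>A. u (f a)) \<in> S"
proof (induction A rule: infinite_finite_induct)
  case (infinite A) then show ?case using addmod_0[OF K S u] by simp
next
  case empty then show ?case using addmod_0[OF K S u] by simp
next
  case (insert a A)
  have a: "u (f a + sum f A) - (u (f a) + u (sum f A)) \<in> S"
    using u insert.prems subgrp_sum[OF K, of A f] unfolding addmod_def by simp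
  have b: "u (sum f A) - (\<Sum>a\<in>A. u (f a)) \<in> S" using insert by simp
  have eq: "u (sum f (insert a A)) - (\<Sum>a\<in>insert a A. u (f a))
     = (u (f a + sum f A) - (u (f a) + u (sum f A))) + (u (sum f A) - (\<Sum>a\<in>A. u (f a)))"
    using insert.hyps by simp
  show ?case unfolding eq by (rule subgrp_add[OF S a b])
qed

lemma addmod_zsmul': assumes K: "subgrp K" and S: "subgrp S" and u: "addmod K S u" and x: "x \<in> K"
  shows "u (zsmul k x) - zsmul k (u x) \<in> S"
proof -
  let ?A = "(\<Sum>i<nat k. x)" and ?B = "(\<Sum>i<nat (- k). x)"
  have A: "?A \<in> K" "?B \<in> K" using subgrp_sum[OF K] x by auto
  have a: "u (?A - ?B) - (u ?A - u ?B) \<in> S" by (rule addmod_diff[OF K S u A])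
  have b: "u ?A - (\<Sum>i<nat k. u x) \<in> S" "u ?B - (\<Sum>i<nat (-k). u x) \<in> S"
    using addmod_sum[OF K S u, of "{..<nat k}" "\<lambda>_. x"] addmod_sum[OF K S u, of "{..<nat (-k)}" "\<lambda>_. x"] x by auto
  have eq: "u (zsmul k x) - zsmul k (u x) = (u (?A - ?B) - (u ?A - u ?B)) + ((u ?A - (\<Sum>i<nat k. u x)) - (u ?B - (\<Sum>i<nat (-k). u x)))"
    by (simp add: zsmul_def algebra_simps)
  show ?thesis unfolding eq by (rule subgrp_add[OF S a subgrp_diff[OF S b]])
qed

lemma addmod_lin: assumes K: "subgrp K" and S: "subgrp S" and u: "addmod K S u"
  and h: "\<And>z. z \<in> Poly_Mapping.keys x \<Longrightarrow> h z \<in> K"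
  shows "u (lin h x) - lin (\<lambda>z. u (h z)) x \<in> S"
proof -
  have a: "u (lin h x) - (\<Sum>z\<in>Poly_Mapping.keys x. u (zsmul (Poly_Mapping.lookup x z) (h z))) \<in> S"
    unfolding lin_def by (rule addmod_sum[OF K S u]) (simp add: subgrp_zsmul[OF K] h)
  have b: "(\<Sum>z\<in>Poly_Mapping.keys x. u (zsmul (Poly_Mapping.lookup x z) (h z))) - lin (\<lambda>z. u (h z)) x \<in> S"
    unfolding lin_def by (rule subgrp_sum_cong[OF S]) (simp add: addmod_zsmul'[OF K S u] h)
  show ?thesis using subgrp_trans[OF S a b] .
qed

lemma addmod_mono: "S \<subseteq> S' \<Longrightarrow> addmod K S u \<Longrightarrow> addmod K S' u"
  unfolding addmod_def by blast

lemma tr_left_addmod: "n \<in> N \<Longrightarrow> addmod M (tensor_rel M N r l) (\<lambda>m. Poly_Mapping.single (m, n) (1::int))"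
  unfolding addmod_def
proof (intro ballI)
  fix x y assume "n \<in> N" "x \<in> M" "y \<in> M"
  then have "Poly_Mapping.single (x + y, n) 1 - Poly_Mapping.single (x, n) 1 - Poly_Mapping.single (y, n) (1::int) \<in> tensor_rel M N r l"
    by (rule tensor_rel.rel_ladd[rotated 2])
  then show "Poly_Mapping.single (x + y, n) 1 - (Poly_Mapping.single (x, n) 1 + Poly_Mapping.single (y, n) (1::int)) \<in> tensor_rel M N r l"
    by (simp add: diff_diff_eq)
qed

lemma tr_right_addmod: "m \<in> M \<Longrightarrow> addmod N (tensor_rel M N r l) (\<lambda>n. Poly_Mapping.single (m, n) (1::int))"
  unfolding addmod_def
proof (intro ballI)
  fix x y assume "m \<in> M" "x \<in> N" "y \<in> N"
  then have "Poly_Mapping.single (m, x + y) 1 - Poly_Mapping.single (m, x) 1 - Poly_Mapping.single (m, y) (1::int) \<in> tensor_rel M N r l"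
    by (rule tensor_rel.rel_radd)
  then show "Poly_Mapping.single (m, x + y) 1 - (Poly_Mapping.single (m, x) 1 + Poly_Mapping.single (m, y) (1::int)) \<in> tensor_rel M N r l"
    by (simp add: diff_diff_eq)
qed

lemma subgrp_UNIV: "subgrp UNIV" by (simp add: subgrp_def)

section \<open>Tor\<close>

lemma Tor_part:
  fixes smul :: "'r::ring \<Rightarrow> 'n::ab_group_add \<Rightarrow> 'n"
  assumes t: "t_unital TYPE('r)" and nm: "null_module smul"
  shows "Tor1_vanishes (UNIV::'r set) ract_R (UNIV::'n set) (lact_mod smul)"
proof -
  define d0 :: "('r \<Rightarrow>\<^sub>0 'r unitz) \<Rightarrow> 'r" where "d0 = aug_r ract_R"
  define d1 :: "(('r \<Rightarrow>\<^sub>0 'r unitz) \<Rightarrow>\<^sub>0 'r unitz) \<Rightarrow> ('r \<Rightarrow>\<^sub>0 'r unitz)" where "d1 = aug_r free_ract"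
  define d2 :: "((('r \<Rightarrow>\<^sub>0 'r unitz) \<Rightarrow>\<^sub>0 'r unitz) \<Rightarrow>\<^sub>0 'r unitz) \<Rightarrow> (('r \<Rightarrow>\<^sub>0 'r unitz) \<Rightarrow>\<^sub>0 'r unitz)" where "d2 = aug_r free_ract"
  define K0 where "K0 = {f \<in> (UNIV :: ('r \<Rightarrow>\<^sub>0 'r unitz) set). d0 f = 0}"
  define P1 where "P1 = (free_car K0 :: (('r \<Rightarrow>\<^sub>0 'r unitz) \<Rightarrow>\<^sub>0 'r unitz) set)"
  define K1 where "K1 = {g \<in> P1. d1 g = 0}"
  define P2 where "P2 = (free_car K1 :: ((('r \<Rightarrow>\<^sub>0 'r unitz) \<Rightarrow>\<^sub>0 'r unitz) \<Rightarrow>\<^sub>0 'r unitz) set)"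
  define e :: "('r \<Rightarrow>\<^sub>0 'r unitz) \<Rightarrow> (('r \<Rightarrow>\<^sub>0 'r unitz) \<Rightarrow>\<^sub>0 'r unitz)" where "e k = Poly_Mapping.single k (1, 0)" for k
  define e0 :: "'r \<Rightarrow> ('r \<Rightarrow>\<^sub>0 'r unitz)" where "e0 a = Poly_Mapping.single a (1, 0)" for a
  define lact :: "'r unitz \<Rightarrow> 'n \<Rightarrow> 'n" where "lact = (\<lambda>s x. zsmul (fst s) x)"
  define T0 where "T0 = tensor_rel (UNIV :: ('r \<Rightarrow>\<^sub>0 'r unitz) set) (UNIV::'n set) free_ract lact"
  define T1 where "T1 = tensor_rel P1 (UNIV::'n set) free_ract lact"
  define D1 where "D1 = (\<lambda>(p, n::'n). (d1 p, n))"
  define D2 where "D2 = (\<lambda>(q, n::'n). (d2 q, n))"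
  define B where "B = {x. \<exists>y. Poly_Mapping.keys y \<subseteq> P2 \<times> UNIV \<and> push D2 y - x \<in> T1}"
  have lm: "lact_mod smul = lact" unfolding lact_def by (rule lact_mod_null[OF nm])
  have d0_add: "d0 (f + g) = d0 f + d0 g" for f g
    unfolding d0_def by (rule aug_r_add) (simp add: ract_R_add)
  have ad0: "additive d0" by (simp add: additive_def d0_add)
  have d0_single [simp]: "d0 (Poly_Mapping.single a c) = ract_R a c" for a c
    unfolding d0_def by (rule aug_r_single) simp
  have d0_ract: "d0 (free_ract f s) = ract_R (d0 f) s" for s f
  proof -
    have "d0 (free_ract f s) = d0 (free_ract (\<Sum>k\<in>Poly_Mapping.keys f. Poly_Mapping.single k (Poly_Mapping.lookup f k)) s)"
      by (subst pm_expand[of f]) simp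
    also have "\<dots> = (\<Sum>k\<in>Poly_Mapping.keys f. ract_R (ract_R k (Poly_Mapping.lookup f k)) s)"
      by (simp add: additive_sum[OF additive_free_ract] additive_sum[OF ad0] ract_R_assoc)
    also have "\<dots> = ract_R (\<Sum>k\<in>Poly_Mapping.keys f. ract_R k (Poly_Mapping.lookup f k)) s"
      by (rule additive_sum[of "\<lambda>a. ract_R a s", symmetric]) (simp add: additive_def ract_R_add2)
    also have "\<dots> = ract_R (d0 f) s"
      by (simp add: d0_def aug_r_def)
    finally show ?thesis .
  qed
  have d1_add: "d1 (f + g) = d1 f + d1 g" for f g
    unfolding d1_def by (rule aug_r_add) (simp add: free_ract_add2)
  have d1_single [simp]: "d1 (Poly_Mapping.single a c) = free_ract a c" for a c
    unfolding d1_def by (rule aug_r_single) simp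
  have ad1: "additive d1" by (simp add: additive_def d1_add)
  have d2_single [simp]: "d2 (Poly_Mapping.single a c) = free_ract a c" for a c
    unfolding d2_def by (rule aug_r_single) simp
  have K0: "subgrp K0" unfolding K0_def subgrp_def using additive_0[OF ad0] additive_neg[OF ad0] d0_add by auto
  have P1: "subgrp P1" unfolding P1_def by (rule subgrp_free_car)
  have K0_ract: "free_ract k s \<in> K0" if "k \<in> K0" for s k using that by (simp add: K0_def d0_ract)
  have eP1: "e k \<in> P1" if "k \<in> K0" for k using that by (simp add: P1_def free_car_def e_def)
  have sP1: "Poly_Mapping.single k c \<in> P1" if "k \<in> K0" for k c
    using that by (simp add: P1_def free_car_def)
  have T1: "subgrp T1" unfolding T1_def by (rule subgrp_tensor_rel)
  have B: "subgrp B" unfolding subgrp_def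
  proof (intro conjI ballI)
    show "0 \<in> B" unfolding B_def
      by (intro CollectI exI[of _ 0]) (simp add: push_lin subgrp_0[OF T1])
    fix x y assume "x \<in> B" "y \<in> B"
    then obtain a b where "Poly_Mapping.keys a \<subseteq> P2 \<times> UNIV" "push D2 a - x \<in> T1"
      "Poly_Mapping.keys b \<subseteq> P2 \<times> UNIV" "push D2 b - y \<in> T1" unfolding B_def by blast
    then show "x + y \<in> B" unfolding B_def
      using keys_add[of a b] subgrp_add_cong[OF T1]
      by (intro CollectI exI[of _ "a + b"]) (auto simp: push_lin lin_add)
  next
    fix x assume "x \<in> B"
    then obtain a where "Poly_Mapping.keys a \<subseteq> P2 \<times> UNIV" "push D2 a - x \<in> T1" unfolding B_def by blast
    then show "- x \<in> B" unfolding B_def using subgrp_sym[OF T1]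
      by (intro CollectI exI[of _ "- a"]) (auto simp: push_lin lin_neg)
  qed
  have T1B: "T1 \<subseteq> B"
  proof
    fix x assume "x \<in> T1"
    then show "x \<in> B" unfolding B_def using subgrp_neg[OF T1]
      by (intro CollectI exI[of _ 0]) (auto simp: push_lin)
  qed
  have Bgen: "Poly_Mapping.single (q, n) 1 \<in> B" if "q \<in> P1" "d1 q = 0" for q n
  proof -
    have "Poly_Mapping.single q (1,0) \<in> P2" using that by (simp add: P2_def K1_def free_car_def)
    then show ?thesis unfolding B_def
      by (intro CollectI exI[of _ "Poly_Mapping.single (Poly_Mapping.single q (1,0), n) 1"])
         (simp add: push_lin D2_def subgrp_0[OF T1])
  qed
  have lefT: "addmod P1 T1 (\<lambda>m. Poly_Mapping.single (m, n) (1::int))" for n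
    unfolding T1_def by (rule tr_left_addmod) simp
  have rigT: "addmod UNIV T1 (\<lambda>n. Poly_Mapping.single (m, n) (1::int))" if "m \<in> P1" for m
    unfolding T1_def by (rule tr_right_addmod[OF that])
  define E where "E (n::'n) k = Poly_Mapping.single (e k, n) (1::int)" for n k
  have E_add: "addmod K0 B (E n)" for n
    unfolding addmod_def
  proof (intro ballI)
    fix k l assume k: "k \<in> K0" and l: "l \<in> K0"
    let ?q = "e (k + l) - (e k + e l)"
    have kl: "k + l \<in> K0" using subgrp_add[OF K0 k l] .
    have q1: "?q \<in> P1" by (intro subgrp_diff[OF P1] subgrp_add[OF P1] eP1 kl k l)
    have "d1 ?q = 0" by (simp add: additive_diff[OF ad1] d1_add e_def)
    then have a: "Poly_Mapping.single (?q, n) 1 \<in> B" by (rule Bgen[OF q1])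
    have b: "Poly_Mapping.single (?q + (e k + e l), n) 1 - (Poly_Mapping.single (?q, n) 1 + Poly_Mapping.single (e k + e l, n) (1::int)) \<in> B"
      using lefT[of n] q1 subgrp_add[OF P1 eP1[OF k] eP1[OF l]] T1B unfolding addmod_def by blast
    have c: "Poly_Mapping.single (e k + e l, n) 1 - (Poly_Mapping.single (e k, n) 1 + Poly_Mapping.single (e l, n) (1::int)) \<in> B"
      using lefT[of n] eP1[OF k] eP1[OF l] T1B unfolding addmod_def by blast
    have eq: "E n (k + l) - (E n k + E n l) = (Poly_Mapping.single (?q + (e k + e l), n) 1 - (Poly_Mapping.single (?q, n) 1 + Poly_Mapping.single (e k + e l, n) (1::int)))
       + Poly_Mapping.single (?q, n) 1 + (Poly_Mapping.single (e k + e l, n) 1 - (Poly_Mapping.single (e k, n) 1 + Poly_Mapping.single (e l, n) (1::int)))"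
      by (simp add: E_def algebra_simps)
    show "E n (k + l) - (E n k + E n l) \<in> B" unfolding eq by (rule subgrp_add[OF B subgrp_add[OF B b a] c])
  qed
  have sing_E: "Poly_Mapping.single (Poly_Mapping.single k c, n) 1 - zsmul (fst c) (E n k) \<in> T1" if k: "k \<in> K0" for k c n
  proof -
    have a0: "Poly_Mapping.single (free_ract (e k) c, n) 1 - Poly_Mapping.single (e k, lact c n) (1::int) \<in> T1"
      unfolding T1_def by (rule tensor_rel.rel_bal) (simp_all add: eP1[OF k])
    then have a: "Poly_Mapping.single (free_ract (e k) c, n) 1 - Poly_Mapping.single (e k, zsmul (fst c) n) (1::int) \<in> T1"
      by (simp add: lact_def)
    have b: "Poly_Mapping.single (e k, zsmul (fst c) n) (1::int) - zsmul (fst c) (Poly_Mapping.single (e k, n) 1) \<in> T1"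
      using addmod_zsmul'[OF subgrp_UNIV T1 rigT[OF eP1[OF k]]] by simp
    show ?thesis using subgrp_trans[OF T1 a b] by (simp add: e_def E_def)
  qed
  have E_ract: "E n (free_ract k c) - zsmul (fst c) (E n k) \<in> B" if k: "k \<in> K0" for k c n
  proof -
    let ?q = "e (free_ract k c) - Poly_Mapping.single k c"
    have sk: "free_ract k c \<in> K0" using K0_ract[OF k] .
    have q1: "?q \<in> P1" by (intro subgrp_diff[OF P1] eP1 sk sP1 k)
    have "d1 ?q = 0" by (simp add: additive_diff[OF ad1] e_def)
    then have a: "Poly_Mapping.single (?q, n) 1 \<in> B" by (rule Bgen[OF q1])
    have b: "Poly_Mapping.single (?q + Poly_Mapping.single k c, n) 1 - (Poly_Mapping.single (?q, n) 1 + Poly_Mapping.single (Poly_Mapping.single k c, n) (1::int)) \<in> B"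
      using lefT[of n] q1 sP1[OF k] T1B unfolding addmod_def by blast
    have c: "Poly_Mapping.single (Poly_Mapping.single k c, n) 1 - zsmul (fst c) (E n k) \<in> B"
      using sing_E[OF k] T1B by blast
    have eq: "E n (free_ract k c) - zsmul (fst c) (E n k) = (Poly_Mapping.single (?q + Poly_Mapping.single k c, n) 1 - (Poly_Mapping.single (?q, n) 1 + Poly_Mapping.single (Poly_Mapping.single k c, n) (1::int)))
       + Poly_Mapping.single (?q, n) 1 + (Poly_Mapping.single (Poly_Mapping.single k c, n) 1 - zsmul (fst c) (E n k))"
      by (simp add: E_def algebra_simps)
    show ?thesis unfolding eq by (rule subgrp_add[OF B subgrp_add[OF B b a] c])
  qed
  define Tm :: "'r \<times> 'r \<Rightarrow> ('r \<Rightarrow>\<^sub>0 'r unitz)" where "Tm z = Poly_Mapping.single (fst z) (0, snd z)" for z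
  have gen: "free_ract j (0, m) \<in> K0 \<and> E n (free_ract j (0, m)) \<in> B" if "j \<in> K0" for m j n
    using K0_ract[OF that] E_ract[OF that, where c="(0, m)" and n=n] by simp
  have key: "lin Tm w \<in> K0 \<and> E n (lin Tm w) \<in> B" if "w \<in> tensor_rel UNIV UNIV (*) (*)" for w n
    using that
  proof (induction rule: tensor_rel.induct)
    case rel_zero
    then show ?case using subgrp_0[OF K0] addmod_0[OF K0 B E_add] by simp
  next
    case (rel_add x y)
    have "E n (lin Tm x + lin Tm y) - (E n (lin Tm x) + E n (lin Tm y)) \<in> B"
      using E_add[of n] rel_add unfolding addmod_def by blast
    then have "E n (lin Tm x + lin Tm y) - (E n (lin Tm x) + E n (lin Tm y)) + (E n (lin Tm x) + E n (lin Tm y)) \<in> B"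
      using rel_add by (intro subgrp_add[OF B]) auto
    then show ?case using subgrp_add[OF K0] rel_add by (simp add: lin_add)
  next
    case (rel_neg x)
    have "E n (- lin Tm x) - (- E n (lin Tm x)) + (- E n (lin Tm x)) \<in> B"
      using rel_neg addmod_neg[OF K0 B E_add] subgrp_neg[OF B] by (intro subgrp_add[OF B]) auto
    then show ?case using subgrp_neg[OF K0] rel_neg by (simp add: lin_neg)
  next
    case (rel_ladd m m' n')
    let ?j = "e0 (m + m') - e0 m - e0 m'"
    have j: "?j \<in> K0" by (simp add: K0_def e0_def additive_diff[OF ad0] d0_add)
    have "lin Tm (Poly_Mapping.single (m + m', n') 1 - Poly_Mapping.single (m, n') 1 - Poly_Mapping.single (m', n') 1)
          = free_ract ?j (0, n')"
      by (simp add: lin_diff Tm_def e0_def additive_diff[OF additive_free_ract] umult_def)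
    then show ?case using gen[OF j] by simp
  next
    case (rel_radd m n1 n2)
    have "lin Tm (Poly_Mapping.single (m, n1 + n2) 1 - Poly_Mapping.single (m, n1) 1 - Poly_Mapping.single (m, n2) 1) = 0"
      by (simp add: lin_diff Tm_def single_add[symmetric] single_diff[symmetric])
    then show ?case using subgrp_0[OF K0] addmod_0[OF K0 B E_add] by simp
  next
    case (rel_bal m n' s)
    let ?j = "e0 (m * s) - Poly_Mapping.single m (0, s)"
    have j: "?j \<in> K0" by (simp add: K0_def e0_def additive_diff[OF ad0] ract_R_def)
    have "lin Tm (Poly_Mapping.single (m * s, n') 1 - Poly_Mapping.single (m, s * n') 1)
          = free_ract ?j (0, n')"
      by (simp add: lin_diff Tm_def e0_def additive_diff[OF additive_free_ract] umult_def)
    then show ?case using gen[OF j] by simp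
  qed
  have ker: "E n k \<in> B" if "k \<in> K0" "ef k = 0" for k n
  proof -
    have fst0: "fst (Poly_Mapping.lookup k a) = 0" for a
      using arg_cong[OF that(2), of "\<lambda>p. Poly_Mapping.lookup p a"] by simp
    define w where "w = (\<Sum>a\<in>Poly_Mapping.keys k. Poly_Mapping.single (a, snd (Poly_Mapping.lookup k a)) (1::int))"
    have "lin Tm w = (\<Sum>a\<in>Poly_Mapping.keys k. Poly_Mapping.single a (0, snd (Poly_Mapping.lookup k a)))"
      by (simp add: w_def lin_sum Tm_def)
    also have "\<dots> = (\<Sum>a\<in>Poly_Mapping.keys k. Poly_Mapping.single a (Poly_Mapping.lookup k a))"
    proof (rule sum.cong)
      fix a
      have "(0, snd (Poly_Mapping.lookup k a)) = Poly_Mapping.lookup k a"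
        using fst0[of a] by (simp add: prod_eq_iff)
      then show "Poly_Mapping.single a (0, snd (Poly_Mapping.lookup k a)) = Poly_Mapping.single a (Poly_Mapping.lookup k a)"
        by simp
    qed simp
    also have "\<dots> = k" by (rule pm_expand[symmetric])
    finally have wk: "lin Tm w = k" .
    have "mult_map w = (\<Sum>a\<in>Poly_Mapping.keys k. a * snd (Poly_Mapping.lookup k a))"
      by (simp add: mult_map_lin w_def lin_sum)
    also have "\<dots> = d0 k"
      by (simp add: d0_def aug_r_def ract_R_def fst0)
    finally have "mult_map w = 0" using that(1) by (simp add: K0_def)
    then have "w \<in> tensor_rel UNIV UNIV (*) (*)" using t by (simp add: t_unital_def)
    then show ?thesis using key wk by metis
  qed
  have sec: "\<exists>f. d0 f = r \<and> ef f = 0" for r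
  proof -
    let ?S = "{r. \<exists>f. d0 f = r \<and> ef f = 0}"
    have S: "subgrp ?S" unfolding subgrp_def
    proof (intro conjI ballI)
      show "0 \<in> ?S" by (rule CollectI, rule exI[of _ 0]) (simp add: additive_0[OF ad0] additive_0[OF additive_ef])
      fix x y assume "x \<in> ?S" "y \<in> ?S"
      then obtain f g where "d0 f = x" "ef f = 0" "d0 g = y" "ef g = 0" by auto
      then show "x + y \<in> ?S" by (intro CollectI exI[of _ "f + g"]) (simp add: d0_add ef_add)
    next
      fix x assume "x \<in> ?S"
      then obtain f where "d0 f = x" "ef f = 0" by auto
      then show "- x \<in> ?S" by (intro CollectI exI[of _ "- f"]) (simp add: additive_neg[OF ad0] additive_neg[OF additive_ef])
    qed
    have P: "a * b \<in> ?S" for a b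
      by (intro CollectI exI[of _ "Poly_Mapping.single a (0, b)"]) (simp add: ract_R_def)
    show ?thesis using tunital_closed[OF t S P] by simp
  qed
  define s where "s a = e0 a - (SOME f. d0 f = a \<and> ef f = 0)" for a
  have s_prop: "s a \<in> K0 \<and> ef (s a) = Poly_Mapping.single a 1" for a
  proof -
    have "d0 (SOME f. d0 f = a \<and> ef f = 0) = a \<and> ef (SOME f. d0 f = a \<and> ef f = 0) = 0"
      by (rule someI_ex) (rule sec)
    then show ?thesis unfolding s_def K0_def e0_def
      by (simp add: additive_diff[OF ad0] additive_diff[OF additive_ef])
  qed
  define L where "L n (f :: 'r \<Rightarrow>\<^sub>0 'r unitz) = lin (\<lambda>a. E n (s a)) (ef f)" for n f
  have L_add: "L n (f + g) = L n f + L n g" for n f g by (simp add: L_def ef_add lin_add)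
  have aL: "additive (L n)" for n by (simp add: additive_def L_add)
  have L_ract: "L n (free_ract f c) = zsmul (fst c) (L n f)" for n c f
    by (simp add: L_def ef_free_ract lin_zsmul)
  have E_L: "E n k - L n k \<in> B" if k: "k \<in> K0" for n k
  proof -
    let ?l = "lin s (ef k)"
    have l: "?l \<in> K0" by (rule subgrp_lin[OF K0]) (use s_prop in blast)
    have "ef ?l = lin (\<lambda>a. Poly_Mapping.single a 1) (ef k)"
      by (simp add: lin_hom[OF additive_ef] s_prop)
    then have efl: "ef ?l = ef k" by (simp add: lin_id)
    have kl: "k - ?l \<in> K0" using subgrp_diff[OF K0 k l] .
    have a: "E n (k - ?l) \<in> B"
      by (rule ker[OF kl]) (simp add: additive_diff[OF additive_ef] efl)
    have b: "E n ((k - ?l) + ?l) - (E n (k - ?l) + E n ?l) \<in> B"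
      using E_add[of n] kl l unfolding addmod_def by blast
    have c: "E n ?l - L n k \<in> B"
      unfolding L_def by (rule addmod_lin[OF K0 B E_add]) (use s_prop in blast)
    have eq: "E n k - L n k = (E n ((k - ?l) + ?l) - (E n (k - ?l) + E n ?l)) + E n (k - ?l) + (E n ?l - L n k)"
      by (simp add: algebra_simps)
    show ?thesis unfolding eq by (rule subgrp_add[OF B subgrp_add[OF B b a] c])
  qed
  have claim2: "Poly_Mapping.single (g, n) 1 - L n (d1 g) \<in> B" if g: "g \<in> P1" for g n
  proof -
    have ks: "Poly_Mapping.keys g \<subseteq> K0" using g by (simp add: P1_def free_car_def)
    have a: "Poly_Mapping.single (g, n) 1 - (\<Sum>k\<in>Poly_Mapping.keys g. Poly_Mapping.single (Poly_Mapping.single k (Poly_Mapping.lookup g k), n) (1::int)) \<in> B"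
    proof -
      have "Poly_Mapping.single (\<Sum>k\<in>Poly_Mapping.keys g. Poly_Mapping.single k (Poly_Mapping.lookup g k), n) 1
          - (\<Sum>k\<in>Poly_Mapping.keys g. Poly_Mapping.single (Poly_Mapping.single k (Poly_Mapping.lookup g k), n) (1::int)) \<in> T1"
        by (rule addmod_sum[OF P1 T1 lefT]) (use ks sP1 in blast)
      then show ?thesis using T1B by (simp flip: pm_expand) blast
    qed
    have b: "(\<Sum>k\<in>Poly_Mapping.keys g. Poly_Mapping.single (Poly_Mapping.single k (Poly_Mapping.lookup g k), n) (1::int))
        - (\<Sum>k\<in>Poly_Mapping.keys g. zsmul (fst (Poly_Mapping.lookup g k)) (L n k)) \<in> B"
    proof (rule subgrp_sum_cong[OF B])
      fix k assume "k \<in> Poly_Mapping.keys g"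
      then have k: "k \<in> K0" using ks by blast
      have "Poly_Mapping.single (Poly_Mapping.single k (Poly_Mapping.lookup g k), n) 1 - zsmul (fst (Poly_Mapping.lookup g k)) (E n k) \<in> B"
        using sing_E[OF k] T1B by blast
      moreover have "zsmul (fst (Poly_Mapping.lookup g k)) (E n k) - zsmul (fst (Poly_Mapping.lookup g k)) (L n k) \<in> B"
        by (rule subgrp_zsmul_cong[OF B E_L[OF k]])
      ultimately show "Poly_Mapping.single (Poly_Mapping.single k (Poly_Mapping.lookup g k), n) 1 - zsmul (fst (Poly_Mapping.lookup g k)) (L n k) \<in> B"
        by (rule subgrp_trans[OF B])
    qed
    have c: "L n (d1 g) = (\<Sum>k\<in>Poly_Mapping.keys g. zsmul (fst (Poly_Mapping.lookup g k)) (L n k))"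
      by (simp add: d1_def aug_r_def additive_sum[OF aL] L_ract)
    show ?thesis using subgrp_trans[OF B a b] c by simp
  qed
  define Lam where "Lam w = lin (\<lambda>z. L (snd z) (fst z)) w" for w
  have claim1: "Lam w \<in> B" if "w \<in> T0" for w
    using that unfolding T0_def
  proof (induction rule: tensor_rel.induct)
    case rel_zero then show ?case by (simp add: Lam_def subgrp_0[OF B])
  next
    case (rel_add x y) then show ?case by (simp add: Lam_def lin_add subgrp_add[OF B])
  next
    case (rel_neg x) then show ?case by (simp add: Lam_def lin_neg subgrp_neg[OF B])
  next
    case (rel_ladd m m' n)
    then show ?case by (simp add: Lam_def lin_diff L_add subgrp_0[OF B])
  next
    case (rel_radd m n n')
    have "lin (\<lambda>a. E (n + n') (s a)) (ef m) - lin (\<lambda>a. E n (s a) + E n' (s a)) (ef m) \<in> T1"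
      using rigT[OF eP1] s_prop unfolding addmod_def E_def
      by (intro subgrp_lin_cong[OF T1]) blast
    then have "L (n + n') m - (L n m + L n' m) \<in> B"
      using T1B by (auto simp: L_def lin_fun_add)
    then show ?case by (simp add: Lam_def lin_diff lin_add diff_diff_eq)
  next
    case (rel_bal m n c)
    have "lin (\<lambda>a. E (lact c n) (s a)) (ef m) - lin (\<lambda>a. zsmul (fst c) (E n (s a))) (ef m) \<in> T1"
      using addmod_zsmul'[OF subgrp_UNIV T1 rigT[OF eP1]] s_prop unfolding E_def lact_def
      by (intro subgrp_lin_cong[OF T1]) blast
    then have "L (lact c n) m - zsmul (fst c) (L n m) \<in> B"
      using T1B by (auto simp: L_def lin_fun_zsmul)
    then have "- (L (lact c n) m - zsmul (fst c) (L n m)) \<in> B" by (rule subgrp_neg[OF B])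
    then show ?case by (simp add: Lam_def lin_diff L_ract)
  qed
  have aLam: "additive Lam" by (simp add: additive_def Lam_def lin_add)
  show ?thesis
    unfolding Tor1_vanishes_def Let_def lm
    unfolding d0_def[symmetric] d1_def[symmetric] d2_def[symmetric] K0_def[symmetric] free_car_UNIV
      P1_def[symmetric] K1_def[symmetric] P2_def[symmetric] D1_def[symmetric] D2_def[symmetric]
      T0_def[symmetric] T1_def[symmetric]
  proof (intro allI impI)
    fix x :: "(('r \<Rightarrow>\<^sub>0 'r unitz) \<Rightarrow>\<^sub>0 'r unitz) \<times> 'n \<Rightarrow>\<^sub>0 int"
    assume "Poly_Mapping.keys x \<subseteq> P1 \<times> UNIV \<and> push D1 x \<in> T0"
    then have kx: "Poly_Mapping.keys x \<subseteq> P1 \<times> UNIV" and cyc: "push D1 x \<in> T0" by auto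
    have "Lam (push D1 x) = lin (\<lambda>z. Lam (Poly_Mapping.single (D1 z) 1)) x"
      by (simp only: push_lin lin_hom[OF aLam])
    also have "\<dots> = lin (\<lambda>z. L (snd z) (d1 (fst z))) x"
      by (simp add: Lam_def D1_def split_beta)
    finally have "Lam (push D1 x) = lin (\<lambda>z. L (snd z) (d1 (fst z))) x" .
    then have a: "lin (\<lambda>z. L (snd z) (d1 (fst z))) x \<in> B" using claim1[OF cyc] by simp
    have b: "lin (\<lambda>z. Poly_Mapping.single z 1) x - lin (\<lambda>z. L (snd z) (d1 (fst z))) x \<in> B"
      by (rule subgrp_lin_cong[OF B]) (use kx claim2 in \<open>auto simp: split_beta\<close>)
    have "x \<in> B" using subgrp_add[OF B b a] by (simp add: lin_id)
    then show "\<exists>y. Poly_Mapping.keys y \<subseteq> P2 \<times> UNIV \<and> push D2 y - x \<in> T1"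
      by (simp add: B_def)
  qed
qed

theorem lemma5p5:
  fixes smul :: "'r::ring \<Rightarrow> 'n::ab_group_add \<Rightarrow> 'n"
  assumes "t_unital TYPE('r)"
    and "left_module smul"
    and "null_module smul"
  shows "(tensor_is_zero (UNIV::'r set) (UNIV::'n set) (*) smul
          \<and> tensor_is_zero (UNIV::'r set) (UNIV::'n set) ract_R (lact_mod smul)
          \<and> Tor1_vanishes (UNIV::'r set) ract_R (UNIV::'n set) (lact_mod smul))
       \<and> ((\<forall>f. is_hom (UNIV::'r set) (UNIV::'n set) (*) smul f \<longrightarrow> (\<forall>a. f a = 0))
          \<and> (\<forall>f. is_hom (UNIV::'r set) (UNIV::'n set) lact_R (lact_mod smul) f \<longrightarrow> (\<forall>a. f a = 0))
          \<and> Ext1_vanishes (UNIV::'r set) lact_R (UNIV::'n set) (lact_mod smul))"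
proof (intro conjI allI impI)
  have nl: "smul r x = 0" for r x using assms(3) by (simp add: null_module_def)
  show "tensor_is_zero (UNIV::'r set) (UNIV::'n set) (*) smul"
    by (rule tensor_zero_generic[OF assms(1)]) (use nl in auto)
  show "tensor_is_zero (UNIV::'r set) (UNIV::'n set) ract_R (lact_mod smul)"
  proof (rule tensor_zero_generic[OF assms(1)])
    fix a b :: 'r and n :: 'n
    show "\<exists>s. ract_R a s = a * b \<and> lact_mod smul s n = 0"
      by (rule exI[of _ "(0, b)"]) (simp add: ract_R_def lact_mod_def nl)
  qed
  show "Tor1_vanishes (UNIV::'r set) ract_R (UNIV::'n set) (lact_mod smul)"
    by (rule Tor_part[OF assms(1) assms(3)])
  show "Ext1_vanishes (UNIV::'r set) lact_R (UNIV::'n set) (lact_mod smul)"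
    by (rule Ext_part[OF assms(1) assms(3)])
  fix f a
  show "is_hom (UNIV::'r set) (UNIV::'n set) (*) smul f \<Longrightarrow> f a = 0"
    by (rule hom_zero_generic[OF assms(1)]) (use nl in auto)
  show "is_hom (UNIV::'r set) (UNIV::'n set) lact_R (lact_mod smul) f \<Longrightarrow> f a = 0"
  proof (rule hom_zero_generic[OF assms(1)])
    fix a b :: 'r
    show "\<exists>s. lact_R s b = a * b \<and> (\<forall>y. lact_mod smul s y = 0)"
      by (rule exI[of _ "(0, a)"]) (simp add: lact_R_def lact_mod_def nl)
  qed
qed

end
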